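(* Let $U$ be a connected graph on $n>2$ vertices that has exactly one cycle, this cycle has $3$ vertices, and $U$ is obtained from the triangle by attaching a (possibly trivial) tree at one vertex of the triangle (so at most one vertex of the triangle has degree greater than $2$ in $U$). Let $\Delta$ be the distance squared matrix of $U$ and let $\ell$ be the number of leaves (vertices of degree $1$) of $U$. Then $i_-(\Delta)=\ell+2$.
   Context: For a connected graph $G$ with vertices $1,\dots,n$, the distance squared matrix $\Delta$ is the $n\times n$ matrix with $(i,j)$ entry $d_{ij}^2$, where $d_{ij}$ is the graph distance between $i$ and $j$. For a real symmetric matrix $M$, $i_-(M)$ denotes the number of negative eigenvalues of $M$ counted with multiplicity. *)

theory Defs
  imports "Jordan_Normal_Form.Char_Poly"
begin

text \<open>Simple graphs on vertex set {0..<n}, given by an adjacency relation E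
  (required to be symmetric and irreflexive on the vertex set).\<close>

definition is_walk :: "(nat \<Rightarrow> nat \<Rightarrow> bool) \<Rightarrow> nat \<Rightarrow> nat list \<Rightarrow> bool" where
  "is_walk E n xs \<longleftrightarrow> xs \<noteq> [] \<and> set xs \<subseteq> {..<n} \<and>
     (\<forall>i. i + 1 < length xs \<longrightarrow> E (xs ! i) (xs ! (i + 1)))"

definition connected_graph :: "(nat \<Rightarrow> nat \<Rightarrow> bool) \<Rightarrow> nat \<Rightarrow> bool" where
  "connected_graph E n \<longleftrightarrow> (\<forall>i<n. \<forall>j<n. \<exists>xs. is_walk E n xs \<and> hd xs = i \<and> last xs = j)"

definition graph_dist :: "(nat \<Rightarrow> nat \<Rightarrow> bool) \<Rightarrow> nat \<Rightarrow> nat \<Rightarrow> nat \<Rightarrow> nat" where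
  "graph_dist E n i j = (LEAST k. \<exists>xs. is_walk E n xs \<and> hd xs = i \<and> last xs = j \<and> length xs = k + 1)"

definition is_cycle :: "(nat \<Rightarrow> nat \<Rightarrow> bool) \<Rightarrow> nat \<Rightarrow> nat list \<Rightarrow> bool" where
  "is_cycle E n xs \<longleftrightarrow> length xs \<ge> 3 \<and> distinct xs \<and> is_walk E n xs \<and> E (last xs) (hd xs)"

definition degree :: "(nat \<Rightarrow> nat \<Rightarrow> bool) \<Rightarrow> nat \<Rightarrow> nat \<Rightarrow> nat" where
  "degree E n v = card {w. w < n \<and> E v w}"

definition leaves :: "(nat \<Rightarrow> nat \<Rightarrow> bool) \<Rightarrow> nat \<Rightarrow> nat set" where
  "leaves E n = {v. v < n \<and> degree E n v = 1}"

definition dist_sq_matrix :: "(nat \<Rightarrow> nat \<Rightarrow> bool) \<Rightarrow> nat \<Rightarrow> real mat" where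
  "dist_sq_matrix E n = mat n n (\<lambda>(i, j). real ((graph_dist E n i j)\<^sup>2))"

text \<open>Number of negative eigenvalues counted with (algebraic) multiplicity,
  i.e. negative roots of the characteristic polynomial with multiplicity.
  For real symmetric matrices this is i_-.\<close>
definition neg_inertia :: "real mat \<Rightarrow> nat" where
  "neg_inertia M = (\<Sum>a\<in>{a. a < 0 \<and> poly (char_poly M) a = 0}. order a (char_poly M))"

end

theory Submission
  imports Defs
begin

lemma sym_real_eigen:
  fixes A :: "real mat"
  assumes A: "A \<in> carrier_mat n n" and sym: "\<And>i j. i < n \<Longrightarrow> j < n \<Longrightarrow> A $$ (i,j) = A $$ (j,i)"
    and n: "n > 0"
  shows "\<exists>r v. v \<in> carrier_vec n \<and> v \<noteq> 0\<^sub>v n \<and> A *\<^sub>v v = r \<cdot>\<^sub>v v"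
proof -
  define Ac where "Ac = map_mat complex_of_real A"
  have Ac: "Ac \<in> carrier_mat n n" using A by (simp add: Ac_def)
  obtain as where cp: "char_poly Ac = (\<Prod>a\<leftarrow>as. [:- a, 1:])" and len: "length as = n"
    using char_poly_factorized[OF Ac] by blast
  from len n obtain z zs where as: "as = z # zs" by (cases as) auto
  have "poly (char_poly Ac) z = 0" unfolding cp as by simp
  hence "eigenvalue Ac z" using eigenvalue_root_char_poly[OF Ac] by simp
  then obtain v where v: "v \<in> carrier_vec n" "v \<noteq> 0\<^sub>v n" "Ac *\<^sub>v v = z \<cdot>\<^sub>v v"
    unfolding eigenvalue_def eigenvector_def using Ac by auto
  define s where "s = (\<Sum>i<n. \<Sum>j<n. cnj (v $ i) * (complex_of_real (A $$ (i,j)) * v $ j))"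
  define N where "N = (\<Sum>i<n. cnj (v $ i) * v $ i)"
  have row: "(\<Sum>j<n. complex_of_real (A $$ (i,j)) * v $ j) = z * v $ i" if i: "i < n" for i
  proof -
    have "(Ac *\<^sub>v v) $ i = z * v $ i" using v(3) i v(1) by simp
    moreover have "(Ac *\<^sub>v v) $ i = (\<Sum>j<n. complex_of_real (A $$ (i,j)) * v $ j)"
      using i A v(1) unfolding Ac_def by (auto simp: mult_mat_vec_def scalar_prod_def lessThan_atLeast0)
    ultimately show ?thesis by simp
  qed
  have "s = (\<Sum>i<n. cnj (v $ i) * (\<Sum>j<n. complex_of_real (A $$ (i,j)) * v $ j))"
    unfolding s_def by (simp add: sum_distrib_left)
  also have "\<dots> = (\<Sum>i<n. z * (cnj (v $ i) * v $ i))" by (intro sum.cong refl, simp add: row)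
  also have "\<dots> = z * N" unfolding N_def by (simp add: sum_distrib_left)
  finally have s1: "s = z * N" .
  have "cnj s = (\<Sum>i<n. \<Sum>j<n. v $ i * (complex_of_real (A $$ (i,j)) * cnj (v $ j)))"
    unfolding s_def by (simp add: cnj_sum)
  also have "\<dots> = (\<Sum>j<n. \<Sum>i<n. v $ i * (complex_of_real (A $$ (i,j)) * cnj (v $ j)))"
    by (rule sum.swap)
  also have "\<dots> = s" unfolding s_def
    by (intro sum.cong refl, simp add: sym mult_ac)
  finally have s2: "cnj s = s" .
  have Nreal: "cnj N = N" unfolding N_def by (simp add: cnj_sum mult.commute)
  have "N \<noteq> 0"
  proof
    assume N0: "N = 0"
    have "Re N = (\<Sum>i<n. Re (v $ i) * Re (v $ i) + Im (v $ i) * Im (v $ i))" unfolding N_def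
      by (simp add: Re_sum)
    hence "(\<Sum>i<n. Re (v $ i) * Re (v $ i) + Im (v $ i) * Im (v $ i)) = 0" using N0 by simp
    hence "\<forall>i\<in>{..<n}. Re (v $ i) * Re (v $ i) + Im (v $ i) * Im (v $ i) = 0"
      by (subst sum_nonneg_eq_0_iff[symmetric]) auto
    hence "\<forall>i<n. v $ i = 0" by (auto simp: complex_eq_iff add_nonneg_eq_0_iff)
    hence "v = 0\<^sub>v n" using v(1) by (intro eq_vecI) auto
    with v(2) show False by simp
  qed
  have "cnj z * N = z * N" using s1 s2 Nreal by (metis complex_cnj_mult)
  hence zr: "cnj z = z" using \<open>N \<noteq> 0\<close> by simp
  hence zeq: "z = complex_of_real (Re z)" by (simp add: complex_eq_iff)
  have "char_poly Ac = map_poly complex_of_real (char_poly A)"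
    unfolding Ac_def by (rule of_real_hom.char_poly_hom[OF A])
  hence "poly (map_poly complex_of_real (char_poly A)) (complex_of_real (Re z)) = 0"
    using \<open>poly (char_poly Ac) z = 0\<close> zeq by simp
  hence "poly (char_poly A) (Re z) = 0" by simp
  hence "eigenvalue A (Re z)" using eigenvalue_root_char_poly[OF A] by simp
  then show ?thesis unfolding eigenvalue_def eigenvector_def using A by auto
qed

definition hh :: "nat \<Rightarrow> real vec \<Rightarrow> real mat" where
  "hh n u = (let w = u - unit_vec n 0; s = w \<bullet> w in
     mat n n (\<lambda>(i,j). (if i = j then 1 else 0) - 2 / s * (w $ i * w $ j)))"

lemma sum_delta_mult: "i < (n::nat) \<Longrightarrow> (\<Sum>k<n. (if i = k then 1 else 0) * (f k :: real)) = f i"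
proof -
  assume "i < n"
  have "(\<Sum>k<n. (if i = k then 1 else 0) * (f k :: real)) = (\<Sum>k<n. if i = k then f k else 0)"
    by (rule sum.cong) auto
  also have "\<dots> = f i" using \<open>i < n\<close> by (subst sum.delta') auto
  finally show ?thesis .
qed

lemma sum_delta_mult2: "i < (n::nat) \<Longrightarrow> (\<Sum>k<n. (if k = i then 1 else 0) * (f k :: real)) = f i"
  using sum_delta_mult[of i n f] by (simp add: eq_commute)

lemma sum_delta_delta: "i < (n::nat) \<Longrightarrow> (\<Sum>k<n. (if i = k then 1 else 0) * (if k = j then 1 else (0::real))) = (if i = j then 1 else 0)"
  using sum_delta_mult[of i n "\<lambda>k. if k = j then 1 else 0"] by simp

lemma hh_props:
  assumes u: "u \<in> carrier_vec n" and n: "n > 0" and uu: "u \<bullet> u = 1"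
  shows "hh n u \<in> carrier_mat n n" "transpose_mat (hh n u) = hh n u"
    "hh n u * hh n u = 1\<^sub>m n" "hh n u *\<^sub>v unit_vec n 0 = u"
proof -
  define w where "w = u - unit_vec n 0"
  define s where "s = w \<bullet> w"
  define c where "c = 2 / s"
  have w: "w \<in> carrier_vec n" using u by (simp add: w_def)
  have H: "hh n u = mat n n (\<lambda>(i,j). (if i = j then 1 else 0) - c * (w $ i * w $ j))"
    by (simp add: hh_def Let_def w_def s_def c_def)
  show "hh n u \<in> carrier_mat n n" unfolding H by simp
  show "transpose_mat (hh n u) = hh n u" unfolding H by (rule eq_matI) (auto simp: mult.commute)
  have s_sum: "s = (\<Sum>k<n. w $ k * w $ k)" unfolding s_def using w
    by (simp add: scalar_prod_def lessThan_atLeast0)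
  have cs: "c * c * s = 2 * c"
  proof (cases "s = 0")
    case True thus ?thesis by (simp add: c_def)
  next
    case False thus ?thesis by (simp add: c_def field_simps power2_eq_square)
  qed
  show "hh n u * hh n u = 1\<^sub>m n"
  proof (rule eq_matI)
    fix i j assume i: "i < dim_row (1\<^sub>m n)" and j: "j < dim_col (1\<^sub>m n)"
    hence i: "i < n" and j: "j < n" by auto
    have "(hh n u * hh n u) $$ (i,j) = (\<Sum>k<n. ((if i = k then 1 else 0) - c * (w $ i * w $ k)) *
         ((if k = j then 1 else 0) - c * (w $ k * w $ j)))"
      unfolding H using i j by (simp add: scalar_prod_def lessThan_atLeast0 row_def col_def)
    also have "\<dots> = (\<Sum>k<n. (if i = k then 1 else 0) * (if k = j then 1 else 0))
        - c * w $ j * (\<Sum>k<n. (if i = k then 1 else 0) * w $ k)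
        - c * w $ i * (\<Sum>k<n. (if k = j then 1 else 0) * w $ k)
        + c * c * w $ i * w $ j * (\<Sum>k<n. w $ k * w $ k)"
      by (simp add: algebra_simps sum.distrib sum_subtractf sum_distrib_left)
    also have "\<dots> = (if i = j then 1 else 0) - c * w $ j * w $ i - c * w $ i * w $ j
        + c * c * s * w $ i * w $ j"
      using i j by (simp add: sum_delta_mult sum_delta_mult2 sum_delta_delta s_sum)
    also have "\<dots> = (if i = j then 1 else 0)" unfolding cs by (simp add: algebra_simps)
    finally show "(hh n u * hh n u) $$ (i, j) = 1\<^sub>m n $$ (i, j)" using i j by simp
  qed (auto simp: H)
  show "hh n u *\<^sub>v unit_vec n 0 = u"
  proof (cases "s = 0")
    case True
    have "\<forall>k\<in>{..<n}. w $ k * w $ k = 0"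
      using True unfolding s_sum by (subst sum_nonneg_eq_0_iff[symmetric]) auto
    hence w0: "\<And>k. k < n \<Longrightarrow> w $ k = 0" by auto
    hence ue: "u = unit_vec n 0" using u by (intro eq_vecI) (auto simp: w_def)
    have "hh n u = 1\<^sub>m n" unfolding H c_def True by (rule eq_matI) auto
    thus ?thesis using ue by simp
  next
    case False
    have uu': "(\<Sum>k<n. u $ k * u $ k) = 1" using uu u by (simp add: scalar_prod_def lessThan_atLeast0)
    have "s = (\<Sum>k<n. u $ k * u $ k) - 2 * u $ 0 + 1"
    proof -
      have "s = (\<Sum>k<n. (u $ k - (if k = 0 then 1 else 0)) * (u $ k - (if k = 0 then 1 else 0)))"
        unfolding s_sum w_def using u by (intro sum.cong refl) auto
      also have "\<dots> = (\<Sum>k<n. u $ k * u $ k) - 2 * (\<Sum>k<n. (if k = 0 then 1 else 0) * u $ k)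
          + (\<Sum>k<n. (if k = 0 then 1 else 0) * (if k = 0 then 1 else (0::real)))"
        by (simp add: algebra_simps sum.distrib sum_subtractf sum_distrib_left)
      also have "\<dots> = (\<Sum>k<n. u $ k * u $ k) - 2 * u $ 0 + 1"
        using n sum_delta_mult[of 0 n "\<lambda>k. u $ k"] sum_delta_delta[of 0 n 0] by simp
      finally show ?thesis .
    qed
    hence s2: "s = 2 - 2 * u $ 0" using uu' by simp
    have w0: "w $ 0 = u $ 0 - 1" using u n by (simp add: w_def)
    have cw: "c * w $ 0 = -1" using False unfolding c_def s2 w0 by (simp add: field_simps)
    show ?thesis
    proof (rule eq_vecI)
      fix i assume "i < dim_vec u"
      hence i: "i < n" using u by simp
      have "(hh n u *\<^sub>v unit_vec n 0) $ i = (\<Sum>k<n. ((if i = k then 1 else 0) - c * (w $ i * w $ k)) * (if k = 0 then 1 else 0))"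
        unfolding H using i by (simp add: mult_mat_vec_def scalar_prod_def lessThan_atLeast0 row_def)
      also have "\<dots> = (if i = 0 then 1 else 0) - c * w $ 0 * w $ i"
        using n i sum_delta_mult2[of 0 n "\<lambda>k. (if i = k then 1 else 0) - c * (w $ i * w $ k)"]
        by (simp add: algebra_simps)
      also have "\<dots> = (if i = 0 then 1 else 0) + w $ i" by (simp add: cw)
      also have "\<dots> = u $ i" using i u by (simp add: w_def)
      finally show "(hh n u *\<^sub>v unit_vec n 0) $ i = u $ i" .
    qed (use u in \<open>auto simp: H\<close>)
  qed
qed

lemma vec_self_pos:
  fixes v :: "real vec"
  assumes v: "v \<in> carrier_vec n" "v \<noteq> 0\<^sub>v n"
  shows "v \<bullet> v > 0"
proof -
  have vv: "v \<bullet> v = (\<Sum>i<n. v $ i * v $ i)" using v by (simp add: scalar_prod_def lessThan_atLeast0)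
  have "v \<bullet> v \<ge> 0" unfolding vv by (intro sum_nonneg) auto
  moreover have "v \<bullet> v \<noteq> 0"
  proof
    assume "v \<bullet> v = 0"
    hence "\<forall>i\<in>{..<n}. v $ i * v $ i = 0" unfolding vv by (subst sum_nonneg_eq_0_iff[symmetric]) auto
    hence "v = 0\<^sub>v n" using v(1) by (intro eq_vecI) auto
    with v(2) show False by simp
  qed
  ultimately show ?thesis by simp
qed

lemma spectral_mat:
  fixes A :: "real mat"
  assumes "A \<in> carrier_mat n n" "\<forall>i<n. \<forall>j<n. A $$ (i,j) = A $$ (j,i)"
  shows "\<exists>P \<in> carrier_mat n n. transpose_mat P * P = 1\<^sub>m n \<and> diagonal_mat (transpose_mat P * A * P)"
  using assms
proof (induction n arbitrary: A)
  case 0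
  show ?case by (rule bexI[of _ "1\<^sub>m 0"]) (auto simp: diagonal_mat_def)
next
  case (Suc m)
  note A = Suc.prems(1)
  have symA: "transpose_mat A = A" using Suc.prems by (intro eq_matI) auto
  obtain r v where v: "v \<in> carrier_vec (Suc m)" "v \<noteq> 0\<^sub>v (Suc m)" "A *\<^sub>v v = r \<cdot>\<^sub>v v"
    using sym_real_eigen[OF A] Suc.prems(2) by blast
  define u where "u = (1 / sqrt (v \<bullet> v)) \<cdot>\<^sub>v v"
  have vpos: "v \<bullet> v > 0" using vec_self_pos[OF v(1,2)] .
  have u: "u \<in> carrier_vec (Suc m)" using v(1) by (simp add: u_def)
  have uu: "u \<bullet> u = 1" unfolding u_def using v(1) vpos
    by (simp add: field_simps real_sqrt_mult[symmetric])
  have Au: "A *\<^sub>v u = r \<cdot>\<^sub>v u" unfolding u_def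
    using mult_mat_vec[OF A v(1)] v(3) v(1) by (simp add: smult_smult_assoc mult.commute)
  define H where "H = hh (Suc m) u"
  note Hp = hh_props[OF u _ uu, folded H_def]
  have H: "H \<in> carrier_mat (Suc m) (Suc m)" and HT: "transpose_mat H = H" and HH: "H * H = 1\<^sub>m (Suc m)"
    and He: "H *\<^sub>v unit_vec (Suc m) 0 = u" using Hp by auto
  define A' where "A' = H * A * H"
  have A': "A' \<in> carrier_mat (Suc m) (Suc m)" using H A by (simp add: A'_def)
  have HA: "H * A \<in> carrier_mat (Suc m) (Suc m)" using H A by simp
  have "transpose_mat A' = transpose_mat H * transpose_mat (H * A)"
    unfolding A'_def by (rule transpose_mult[OF HA H])
  also have "transpose_mat (H * A) = transpose_mat A * transpose_mat H" by (rule transpose_mult[OF H A])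
  also have "transpose_mat H * (transpose_mat A * transpose_mat H) = H * A * H"
    unfolding HT symA using H A by (simp add: assoc_mult_mat[of _ "Suc m" "Suc m"])
  finally have A'T: "transpose_mat A' = A'" unfolding A'_def .
  have e0: "unit_vec (Suc m) 0 \<in> carrier_vec (Suc m)" by simp
  have He0: "H *\<^sub>v unit_vec (Suc m) 0 \<in> carrier_vec (Suc m)" using H by simp
  have "A' *\<^sub>v unit_vec (Suc m) 0 = (H * A) *\<^sub>v (H *\<^sub>v unit_vec (Suc m) 0)"
    unfolding A'_def by (rule assoc_mult_mat_vec[OF HA H e0])
  also have "\<dots> = H *\<^sub>v (A *\<^sub>v (H *\<^sub>v unit_vec (Suc m) 0))"
    by (rule assoc_mult_mat_vec[OF H A He0])
  also have "\<dots> = r \<cdot>\<^sub>v (H *\<^sub>v u)" unfolding He Au using mult_mat_vec[OF H u] by simp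
  also have "H *\<^sub>v u = unit_vec (Suc m) 0"
    unfolding He[symmetric] using assoc_mult_mat_vec[OF H H e0] HH by simp
  finally have col0: "A' *\<^sub>v unit_vec (Suc m) 0 = r \<cdot>\<^sub>v unit_vec (Suc m) 0" .
  have A'i0: "A' $$ (i, 0) = (if i = 0 then r else 0)" if i: "i < Suc m" for i
  proof -
    have "(A' *\<^sub>v unit_vec (Suc m) 0) $ i = A' $$ (i, 0)"
      using A' i by (simp add: mult_mat_vec_def)
    thus ?thesis using col0 i by (cases "i = 0") auto
  qed
  have A'sym: "A' $$ (i,j) = A' $$ (j,i)" if "i < Suc m" "j < Suc m" for i j
    using that A'T A' by (metis carrier_matD index_transpose_mat(1))
  obtain A1 A2 A3 A4 where sb: "split_block A' 1 1 = (A1, A2, A3, A4)" by (cases "split_block A' 1 1") auto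
  have dims: "dim_row A' = 1 + m" "dim_col A' = 1 + m" using A' by auto
  note sbl = split_block[OF sb dims]
  have A2: "A2 = 0\<^sub>m 1 m"
    using sb A' A'sym[of 0] A'i0 by (auto simp: split_block_def intro!: eq_matI)
  have A3: "A3 = 0\<^sub>m m 1"
    using sb A' A'i0 by (auto simp: split_block_def intro!: eq_matI)
  have A4sym: "\<forall>i<m. \<forall>j<m. A4 $$ (i,j) = A4 $$ (j,i)"
    using sb A' A'sym by (auto simp: split_block_def)
  obtain P4 where P4: "P4 \<in> carrier_mat m m" "transpose_mat P4 * P4 = 1\<^sub>m m"
    "diagonal_mat (transpose_mat P4 * A4 * P4)"
    using Suc.IH[OF sbl(4) A4sym] by blast
  have c11: "1\<^sub>m 1 \<in> carrier_mat 1 1" and z1m: "0\<^sub>m 1 m \<in> carrier_mat 1 m"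
    and zm1: "0\<^sub>m m 1 \<in> carrier_mat m 1" by auto
  have P4T: "transpose_mat P4 \<in> carrier_mat m m" using P4 by simp
  have P4A4: "transpose_mat P4 * A4 \<in> carrier_mat m m" using P4 sbl by simp
  define F where "F = four_block_mat (1\<^sub>m 1) (0\<^sub>m 1 m) (0\<^sub>m m 1) P4"
  define FT where "FT = four_block_mat (1\<^sub>m 1) (0\<^sub>m 1 m) (0\<^sub>m m 1) (transpose_mat P4)"
  have F: "F \<in> carrier_mat (Suc m) (Suc m)"
    using four_block_carrier_mat[of "1\<^sub>m 1" 1 1 P4 m m "0\<^sub>m 1 m" "0\<^sub>m m 1"] P4 by (simp add: F_def)
  have FT: "FT \<in> carrier_mat (Suc m) (Suc m)"
    using four_block_carrier_mat[of "1\<^sub>m 1" 1 1 "transpose_mat P4" m m "0\<^sub>m 1 m" "0\<^sub>m m 1"] P4 by (simp add: FT_def)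
  have FTF: "transpose_mat F = FT" unfolding F_def FT_def
    by (subst transpose_four_block_mat) (use P4 in auto)
  define P where "P = H * F"
  have P: "P \<in> carrier_mat (Suc m) (Suc m)" using H F by (simp add: P_def)
  have HH': "H * H \<in> carrier_mat (Suc m) (Suc m)" using H by simp
  have PT: "transpose_mat P = FT * H" unfolding P_def using H F
    by (simp add: transpose_mult[of _ "Suc m" "Suc m"] HT FTF)
  have HF: "H * F \<in> carrier_mat (Suc m) (Suc m)" using H F by simp
  have "transpose_mat P * P = FT * (H * H) * F" unfolding PT unfolding P_def
    using assoc_mult_mat[OF FT H HF] assoc_mult_mat[OF FT HH' F] assoc_mult_mat[OF H H F] by simp
  also have "\<dots> = FT * F" using FT F by (simp add: HH)
  also have "\<dots> = 1\<^sub>m (Suc m)" unfolding FT_def F_def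
    by (subst mult_four_block_mat[OF c11 z1m zm1 P4T c11 z1m zm1 P4(1)]) (use P4 in auto)
  finally have PTP: "transpose_mat P * P = 1\<^sub>m (Suc m)" .
  have FTH: "FT * H \<in> carrier_mat (Suc m) (Suc m)" using H FT by simp
  have AHF: "A * (H * F) \<in> carrier_mat (Suc m) (Suc m)" using A HF by simp
  have "transpose_mat P * A * P = (FT * H) * A * (H * F)" unfolding PT unfolding P_def ..
  also have "\<dots> = (FT * H) * (A * (H * F))" by (rule assoc_mult_mat[OF FTH A HF])
  also have "\<dots> = FT * (H * (A * (H * F)))" by (rule assoc_mult_mat[OF FT H AHF])
  also have "H * (A * (H * F)) = (H * A) * (H * F)" by (rule assoc_mult_mat[OF H A HF, symmetric])
  also have "\<dots> = ((H * A) * H) * F" by (rule assoc_mult_mat[OF HA H F, symmetric])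
  also have "FT * (((H * A) * H) * F) = FT * A' * F" unfolding A'_def by (rule assoc_mult_mat[OF FT _ F, symmetric]) (use HA H in simp)
  also have "A' = four_block_mat A1 (0\<^sub>m 1 m) (0\<^sub>m m 1) A4" using sbl(5) A2 A3 by simp
  also have "FT * four_block_mat A1 (0\<^sub>m 1 m) (0\<^sub>m m 1) A4 =
      four_block_mat A1 (0\<^sub>m 1 m) (0\<^sub>m m 1) (transpose_mat P4 * A4)" unfolding FT_def
    by (subst mult_four_block_mat[OF c11 z1m zm1 P4T sbl(1) z1m zm1 sbl(4)]) (use P4 sbl in auto)
  also have "\<dots> * F = four_block_mat A1 (0\<^sub>m 1 m) (0\<^sub>m m 1) (transpose_mat P4 * A4 * P4)" unfolding F_def
    by (subst mult_four_block_mat[OF sbl(1) z1m zm1 P4A4 c11 z1m zm1 P4(1)]) (use P4 sbl in auto)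
  finally have PAP: "transpose_mat P * A * P = four_block_mat A1 (0\<^sub>m 1 m) (0\<^sub>m m 1) (transpose_mat P4 * A4 * P4)" .
  have "diagonal_mat (transpose_mat P * A * P)"
    unfolding PAP diagonal_mat_def
  proof (intro allI impI)
    fix i j assume ij: "i < dim_row (four_block_mat A1 (0\<^sub>m 1 m) (0\<^sub>m m 1) (transpose_mat P4 * A4 * P4))"
      "j < dim_col (four_block_mat A1 (0\<^sub>m 1 m) (0\<^sub>m m 1) (transpose_mat P4 * A4 * P4))" "i \<noteq> j"
    have d: "transpose_mat P4 * A4 * P4 \<in> carrier_mat m m" using P4 sbl by auto
    from ij have i: "i < 1 + m" and j: "j < 1 + m" using d sbl by auto
    show "four_block_mat A1 (0\<^sub>m 1 m) (0\<^sub>m m 1) (transpose_mat P4 * A4 * P4) $$ (i, j) = 0"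
      using P4(3) d sbl i j ij(3) unfolding diagonal_mat_def by (auto simp: index_mat_four_block)
  qed
  thus ?case using P PTP by blast
qed

lemma order_prod_lin:
  fixes xs :: "real list"
  shows "order a (\<Prod>x\<leftarrow>xs. [:- x, 1:]) = length (filter (\<lambda>x. x = a) xs)"
proof (induction xs)
  case Nil
  then show ?case by (simp add: order_0I)
next
  case (Cons x xs)
  have nz: "(\<Prod>x\<leftarrow>xs. [:- x, 1:]) \<noteq> (0 :: real poly)"
    using prod_list_zero_iff[of "map (\<lambda>x. [:- x, 1:]) xs"] by auto
  have "order a ([:- x, 1:] * (\<Prod>x\<leftarrow>xs. [:- x, 1:])) = order a [:- x, 1:] + order a (\<Prod>x\<leftarrow>xs. [:- x, 1:])"
    by (rule order_mult, rule no_zero_divisors) (auto simp: nz)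
  thus ?case using Cons by (simp add: order_linear')
qed

lemma poly_prod_lin: "poly (\<Prod>x\<leftarrow>xs. [:- x, 1:]) a = 0 \<longleftrightarrow> a \<in> set (xs :: real list)"
  by (induction xs) auto

lemma neg_inertia_diag:
  fixes d :: "nat \<Rightarrow> real"
  assumes cp: "char_poly A = (\<Prod>x\<leftarrow>map d [0..<n]. [:- x, 1:])"
  shows "neg_inertia A = card {i. i < n \<and> d i < 0}"
proof -
  define R where "R = {a. a < 0 \<and> poly (char_poly A) a = 0}"
  have R: "R = d ` {i. i < n \<and> d i < 0}" unfolding R_def cp poly_prod_lin by auto
  have cnt: "order a (char_poly A) = card {i. i < n \<and> d i = a}" for a
  proof -
    have "{i. i < n \<and> map d [0..<n] ! i = a} = {i. i < n \<and> d i = a}" by auto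
    thus ?thesis unfolding cp order_prod_lin length_filter_conv_card by simp
  qed
  have "neg_inertia A = (\<Sum>a\<in>R. card {i. i < n \<and> d i = a})"
    unfolding neg_inertia_def R_def[symmetric] cnt ..
  also have "\<dots> = card (\<Union>a\<in>R. {i. i < n \<and> d i = a})"
    by (rule card_UN_disjoint[symmetric]) (auto simp: R)
  also have "(\<Union>a\<in>R. {i. i < n \<and> d i = a}) = {i. i < n \<and> d i < 0}" unfolding R by auto
  finally show ?thesis .
qed

lemma spectral_fun:
  fixes A :: "real mat"
  assumes A: "A \<in> carrier_mat n n" and sym: "\<forall>i<n. \<forall>j<n. A $$ (i,j) = A $$ (j,i)"
  shows "\<exists>p d. (\<forall>x<n. \<forall>y<n. (\<Sum>i<n. p i x * p i y) = (if x = y then 1 else 0)) \<and>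
    (\<forall>i<n. \<forall>j<n. (\<Sum>x<n. p i x * p j x) = (if i = j then 1 else 0)) \<and>
    (\<forall>x<n. \<forall>y<n. A $$ (x,y) = (\<Sum>i<n. d i * p i x * p i y)) \<and>
    neg_inertia A = card {i. i < n \<and> d i < 0}"
proof -
  obtain P where P: "P \<in> carrier_mat n n" and PTP: "transpose_mat P * P = 1\<^sub>m n"
    and dg: "diagonal_mat (transpose_mat P * A * P)" using spectral_mat[OF A sym] by blast
  have PT: "transpose_mat P \<in> carrier_mat n n" using P by simp
  have PPT: "P * transpose_mat P = 1\<^sub>m n" by (rule mat_mult_left_right_inverse[OF PT P PTP])
  define D where "D = transpose_mat P * A * P"
  have D: "D \<in> carrier_mat n n" using P A by (simp add: D_def)
  define d where "d i = D $$ (i,i)" for i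
  define p where "p i x = P $$ (x,i)" for i x
  have Dd: "D $$ (i,j) = (if i = j then d i else 0)" if "i < n" "j < n" for i j
    using dg that D unfolding D_def[symmetric] diagonal_mat_def d_def by auto
  have o1: "(\<Sum>i<n. p i x * p i y) = (if x = y then 1 else 0)" if "x < n" "y < n" for x y
  proof -
    have "(P * transpose_mat P) $$ (x,y) = (\<Sum>i<n. p i x * p i y)"
      using that P by (simp add: scalar_prod_def p_def lessThan_atLeast0)
    thus ?thesis using PPT that by simp
  qed
  have o2: "(\<Sum>x<n. p i x * p j x) = (if i = j then 1 else 0)" if "i < n" "j < n" for i j
  proof -
    have "(transpose_mat P * P) $$ (i,j) = (\<Sum>x<n. p i x * p j x)"
      using that P by (simp add: scalar_prod_def p_def lessThan_atLeast0)
    thus ?thesis using PTP that by simp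
  qed
  have APD: "A = P * D * transpose_mat P"
  proof -
    have PA: "transpose_mat P * A \<in> carrier_mat n n" using PT A by simp
    have "P * D = P * ((transpose_mat P * A) * P)" unfolding D_def ..
    also have "\<dots> = (P * (transpose_mat P * A)) * P" by (rule assoc_mult_mat[OF P PA P, symmetric])
    also have "P * (transpose_mat P * A) = (P * transpose_mat P) * A" by (rule assoc_mult_mat[OF P PT A, symmetric])
    also have "\<dots> = A" using A by (simp add: PPT)
    finally have "P * D = A * P" .
    hence "P * D * transpose_mat P = A * P * transpose_mat P" by simp
    also have "\<dots> = A * (P * transpose_mat P)" by (rule assoc_mult_mat[OF A P PT])
    also have "\<dots> = A" using A by (simp add: PPT)
    finally show ?thesis by simp
  qed
  have ent: "A $$ (x,y) = (\<Sum>i<n. d i * p i x * p i y)" if xy: "x < n" "y < n" for x y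
  proof -
    have PD: "(P * D) $$ (x,j) = p j x * d j" if "j < n" for j
    proof -
      have "(P * D) $$ (x,j) = (\<Sum>i<n. P $$ (x,i) * D $$ (i,j))"
        using xy that P D by (simp add: scalar_prod_def lessThan_atLeast0)
      also have "\<dots> = (\<Sum>i<n. if i = j then P $$ (x,i) * d i else 0)"
        by (intro sum.cong refl) (use that in \<open>auto simp: Dd\<close>)
      also have "\<dots> = p j x * d j" using that by (simp add: p_def)
      finally show ?thesis .
    qed
    have "A $$ (x,y) = (\<Sum>j<n. (P * D) $$ (x,j) * P $$ (y,j))"
      using xy P D by (subst APD) (simp add: scalar_prod_def lessThan_atLeast0 sum_distrib_left
        sum_distrib_right mult.assoc, subst sum.swap, simp)
    also have "\<dots> = (\<Sum>j<n. d j * p j x * p j y)"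
      by (intro sum.cong refl) (simp add: PD p_def)
    finally show ?thesis .
  qed
  have sim: "similar_mat A D" unfolding similar_mat_def similar_mat_wit_def
    using P PT D A PPT PTP APD by (intro exI[of _ P] exI[of _ "transpose_mat P"]) (auto simp: Let_def)
  have ut: "upper_triangular D" using D Dd unfolding upper_triangular_def by auto
  have "char_poly A = char_poly D" by (rule char_poly_similar[OF sim])
  also have "\<dots> = (\<Prod>x\<leftarrow>diag_mat D. [:- x, 1:])" by (rule char_poly_upper_triangular[OF D ut])
  also have "diag_mat D = map d [0..<n]" using D by (simp add: diag_mat_def d_def)
  finally have "neg_inertia A = card {i. i < n \<and> d i < 0}" by (rule neg_inertia_diag)
  thus ?thesis using o1 o2 ent by blast
qed

lemma underdet:
  fixes c :: "'k \<Rightarrow> 'i \<Rightarrow> real"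
  assumes "finite K" "finite I" "card K < card I"
  shows "\<exists>\<beta>. (\<exists>i\<in>I. \<beta> i \<noteq> 0) \<and> (\<forall>k\<in>K. (\<Sum>i\<in>I. c k i * \<beta> i) = 0)"
  using assms
proof (induction K arbitrary: I c rule: finite_induct)
  case empty
  then obtain i0 where "i0 \<in> I" by (metis all_not_in_conv card.empty less_irrefl)
  then show ?case by (intro exI[of _ "\<lambda>_. 1"]) auto
next
  case (insert k0 K)
  show ?case
  proof (cases "\<forall>i\<in>I. c k0 i = 0")
    case True
    have cK: "card K < card I" using insert.prems(2) insert.hyps by simp
    obtain \<beta> where b: "\<exists>i\<in>I. \<beta> i \<noteq> 0" "\<forall>k\<in>K. (\<Sum>i\<in>I. c k i * \<beta> i) = 0"
      using insert.IH[OF insert.prems(1) cK, of c] by blast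
    show ?thesis using b True by (intro exI[of _ \<beta>]) auto
  next
    case False
    then obtain i0 where i0: "i0 \<in> I" "c k0 i0 \<noteq> 0" by auto
    define I' where "I' = I - {i0}"
    define c' where "c' k i = c k i - c k i0 * c k0 i / c k0 i0" for k i
    have fI': "finite I'" using insert.prems by (simp add: I'_def)
    have cI': "card K < card I'" using insert.prems insert.hyps i0 by (simp add: I'_def)
    obtain \<beta>' where b': "\<exists>i\<in>I'. \<beta>' i \<noteq> 0" "\<forall>k\<in>K. (\<Sum>i\<in>I'. c' k i * \<beta>' i) = 0"
      using insert.IH[OF fI' cI'] by blast
    define \<beta> where "\<beta> i = (if i = i0 then - (\<Sum>j\<in>I'. c k0 j * \<beta>' j) / c k0 i0 else \<beta>' i)" for i
    have sumI: "(\<Sum>i\<in>I. f i) = f i0 + (\<Sum>i\<in>I'. f i)" for f :: "'i \<Rightarrow> real"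
      using insert.prems(1) i0(1) unfolding I'_def by (simp add: sum.remove)
    have sI': "(\<Sum>i\<in>I'. g i * \<beta> i) = (\<Sum>i\<in>I'. g i * \<beta>' i)" for g :: "'i \<Rightarrow> real"
      by (intro sum.cong refl) (auto simp: \<beta>_def I'_def)
    have "\<exists>i\<in>I. \<beta> i \<noteq> 0" using b'(1) by (auto simp: \<beta>_def I'_def)
    moreover have "(\<Sum>i\<in>I. c k i * \<beta> i) = 0" if k: "k \<in> insert k0 K" for k
    proof (cases "k = k0")
      case True
      show ?thesis unfolding True sumI sI' using i0(2) by (simp add: \<beta>_def)
    next
      case False
      hence kK: "k \<in> K" using k by simp
      have "0 = (\<Sum>i\<in>I'. c' k i * \<beta>' i)" using b'(2) kK by simp
      also have "\<dots> = (\<Sum>i\<in>I'. c k i * \<beta>' i) - c k i0 / c k0 i0 * (\<Sum>i\<in>I'. c k0 i * \<beta>' i)"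
        unfolding c'_def by (simp add: algebra_simps sum_subtractf sum_distrib_left)
      also have "\<dots> = (\<Sum>i\<in>I. c k i * \<beta> i)" unfolding sumI sI' using i0(2)
        by (simp add: \<beta>_def field_simps)
      finally show ?thesis by simp
    qed
    ultimately show ?thesis by blast
  qed
qed

definition qf :: "real mat \<Rightarrow> nat \<Rightarrow> (nat \<Rightarrow> real) \<Rightarrow> real" where
  "qf A n u = (\<Sum>x<n. \<Sum>y<n. A $$ (x,y) * u x * u y)"

lemma qf_spec:
  assumes ent: "\<forall>x<n. \<forall>y<n. A $$ (x,y) = (\<Sum>i<n. d i * p i x * p i y)"
  shows "qf A n u = (\<Sum>i<n. d i * (\<Sum>x<n. p i x * u x)^2)"
proof -
  have "qf A n u = (\<Sum>x<n. \<Sum>y<n. \<Sum>i<n. d i * (p i x * u x) * (p i y * u y))"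
    unfolding qf_def using ent by (intro sum.cong refl) (simp add: sum_distrib_left sum_distrib_right mult_ac)
  also have "\<dots> = (\<Sum>x<n. \<Sum>i<n. \<Sum>y<n. d i * (p i x * u x) * (p i y * u y))"
    by (intro sum.cong refl sum.swap)
  also have "\<dots> = (\<Sum>i<n. \<Sum>x<n. \<Sum>y<n. d i * (p i x * u x) * (p i y * u y))"
    by (rule sum.swap)
  also have "\<dots> = (\<Sum>i<n. d i * (\<Sum>x<n. p i x * u x)^2)"
    by (intro sum.cong refl) (simp add: power2_eq_square sum_distrib_left sum_distrib_right mult_ac)
  finally show ?thesis .
qed

lemma neg_lower:
  fixes A :: "real mat" and nv :: "'i \<Rightarrow> nat \<Rightarrow> real"
  assumes A: "A \<in> carrier_mat n n" and sym: "\<forall>i<n. \<forall>j<n. A $$ (i,j) = A $$ (j,i)"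
    and fI: "finite I"
    and neg: "\<And>\<beta>. (\<exists>i\<in>I. \<beta> i \<noteq> 0) \<Longrightarrow> qf A n (\<lambda>x. \<Sum>i\<in>I. \<beta> i * nv i x) < 0"
  shows "card I \<le> neg_inertia A"
proof (rule ccontr)
  assume "\<not> card I \<le> neg_inertia A"
  hence lt: "neg_inertia A < card I" by simp
  obtain p d where o1: "\<forall>x<n. \<forall>y<n. (\<Sum>i<n. p i x * p i y) = (if x = y then 1 else 0)"
    and ent: "\<forall>x<n. \<forall>y<n. A $$ (x,y) = (\<Sum>i<n. d i * p i x * p i y)"
    and ni: "neg_inertia A = card {i. i < n \<and> d i < 0}"
    using spectral_fun[OF A sym] by blast
  define K where "K = {i. i < n \<and> d i < 0}"
  have fK: "finite K" by (simp add: K_def)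
  obtain \<beta> where b: "\<exists>i\<in>I. \<beta> i \<noteq> 0"
    "\<forall>k\<in>K. (\<Sum>i\<in>I. (\<Sum>x<n. p k x * nv i x) * \<beta> i) = 0"
    using underdet[OF fK fI, of "\<lambda>k i. \<Sum>x<n. p k x * nv i x"] lt ni K_def by auto
  define u where "u x = (\<Sum>i\<in>I. \<beta> i * nv i x)" for x
  have pu: "(\<Sum>x<n. p k x * u x) = 0" if "k \<in> K" for k
  proof -
    have "(\<Sum>x<n. p k x * u x) = (\<Sum>i\<in>I. (\<Sum>x<n. p k x * nv i x) * \<beta> i)"
      unfolding u_def by (simp add: sum_distrib_left sum_distrib_right mult_ac sum.swap[of _ I])
    thus ?thesis using b(2) that by simp
  qed
  have "qf A n u = (\<Sum>i<n. d i * (\<Sum>x<n. p i x * u x)^2)" by (rule qf_spec[OF ent])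
  also have "\<dots> \<ge> 0"
  proof (intro sum_nonneg)
    fix i assume "i \<in> {..<n}"
    show "d i * (\<Sum>x<n. p i x * u x)^2 \<ge> 0"
      using pu[of i] \<open>i \<in> {..<n}\<close> by (cases "d i < 0") (auto simp: K_def)
  qed
  finally have "qf A n u \<ge> 0" .
  moreover have "qf A n u < 0" unfolding u_def using neg[OF b(1)] by simp
  ultimately show False by simp
qed

lemma neg_upper:
  fixes A :: "real mat" and wv :: "'j \<Rightarrow> nat \<Rightarrow> real"
  assumes A: "A \<in> carrier_mat n n" and sym: "\<forall>i<n. \<forall>j<n. A $$ (i,j) = A $$ (j,i)"
    and fJ: "finite J"
    and indep: "\<And>\<gamma>. (\<forall>x<n. (\<Sum>j\<in>J. \<gamma> j * wv j x) = 0) \<Longrightarrow> \<forall>j\<in>J. \<gamma> j = 0"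
    and psd: "\<And>\<gamma>. qf A n (\<lambda>x. \<Sum>j\<in>J. \<gamma> j * wv j x) \<ge> 0"
  shows "neg_inertia A + card J \<le> n"
proof (rule ccontr)
  assume "\<not> neg_inertia A + card J \<le> n"
  hence lt: "n < neg_inertia A + card J" by simp
  obtain p d where o1: "\<forall>x<n. \<forall>y<n. (\<Sum>i<n. p i x * p i y) = (if x = y then 1 else 0)"
    and ent: "\<forall>x<n. \<forall>y<n. A $$ (x,y) = (\<Sum>i<n. d i * p i x * p i y)"
    and ni: "neg_inertia A = card {i. i < n \<and> d i < 0}"
    using spectral_fun[OF A sym] by blast
  define K where "K = {i. i < n \<and> \<not> d i < 0}"
  have fK: "finite K" by (simp add: K_def)
  have "card K + card {i. i < n \<and> d i < 0} = n"
  proof -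
    have "card K + card {i. i < n \<and> d i < 0} = card (K \<union> {i. i < n \<and> d i < 0})"
      by (rule card_Un_disjoint[symmetric]) (auto simp: K_def)
    also have "K \<union> {i. i < n \<and> d i < 0} = {..<n}" by (auto simp: K_def)
    finally show ?thesis by simp
  qed
  hence cK: "card K < card J" using lt ni by simp
  obtain \<gamma> where g: "\<exists>j\<in>J. \<gamma> j \<noteq> 0"
    "\<forall>k\<in>K. (\<Sum>j\<in>J. (\<Sum>x<n. p k x * wv j x) * \<gamma> j) = 0"
    using underdet[OF fK fJ cK, of "\<lambda>k j. \<Sum>x<n. p k x * wv j x"] by auto
  define u where "u x = (\<Sum>j\<in>J. \<gamma> j * wv j x)" for x
  have pu: "(\<Sum>x<n. p k x * u x) = 0" if "k \<in> K" for k
  proof -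
    have "(\<Sum>x<n. p k x * u x) = (\<Sum>j\<in>J. (\<Sum>x<n. p k x * wv j x) * \<gamma> j)"
      unfolding u_def by (simp add: sum_distrib_left sum_distrib_right mult_ac sum.swap[of _ J])
    thus ?thesis using g(2) that by simp
  qed
  have "\<exists>x<n. u x \<noteq> 0"
  proof (rule ccontr)
    assume "\<not> (\<exists>x<n. u x \<noteq> 0)"
    hence "\<forall>j\<in>J. \<gamma> j = 0" using indep[of \<gamma>] unfolding u_def by auto
    with g(1) show False by auto
  qed
  then obtain x0 where x0: "x0 < n" "u x0 \<noteq> 0" by auto
  have "\<exists>i<n. d i < 0 \<and> (\<Sum>x<n. p i x * u x) \<noteq> 0"
  proof (rule ccontr)
    assume nz: "\<not> (\<exists>i<n. d i < 0 \<and> (\<Sum>x<n. p i x * u x) \<noteq> 0)"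
    have all0: "(\<Sum>x<n. p i x * u x) = 0" if "i < n" for i
      using nz pu[of i] that by (cases "d i < 0") (auto simp: K_def)
    have "u x0 = (\<Sum>y<n. (if x0 = y then 1 else 0) * u y)" using x0(1) by (simp add: sum_delta_mult)
    also have "\<dots> = (\<Sum>y<n. (\<Sum>i<n. p i x0 * p i y) * u y)"
      using o1 x0(1) by (intro sum.cong refl) auto
    also have "\<dots> = (\<Sum>y<n. \<Sum>i<n. p i x0 * (p i y * u y))"
      by (intro sum.cong refl) (simp add: sum_distrib_right mult.assoc)
    also have "\<dots> = (\<Sum>i<n. \<Sum>y<n. p i x0 * (p i y * u y))"
      by (rule sum.swap)
    also have "\<dots> = (\<Sum>i<n. p i x0 * (\<Sum>y<n. p i y * u y))"
      by (simp add: sum_distrib_left)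
    also have "\<dots> = 0" using all0 by simp
    finally show False using x0(2) by simp
  qed
  then obtain i0 where i0: "i0 < n" "d i0 < 0" "(\<Sum>x<n. p i0 x * u x) \<noteq> 0" by auto
  have "qf A n u = (\<Sum>i<n. d i * (\<Sum>x<n. p i x * u x)^2)" by (rule qf_spec[OF ent])
  also have "\<dots> < (\<Sum>i<n. 0)"
  proof (rule sum_strict_mono_ex1)
    show "finite {..<n}" by simp
    show "\<exists>a\<in>{..<n}. d a * (\<Sum>x<n. p a x * u x)^2 < 0"
      using i0 by (intro bexI[of _ i0]) (auto simp: mult_neg_pos)
    show "\<forall>i\<in>{..<n}. d i * (\<Sum>x<n. p i x * u x)^2 \<le> 0"
    proof
      fix i assume "i \<in> {..<n}"
      show "d i * (\<Sum>x<n. p i x * u x)^2 \<le> 0"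
        using pu[of i] \<open>i \<in> {..<n}\<close> by (cases "d i < 0") (auto simp: K_def mult_nonpos_nonneg)
    qed
  qed
  finally have "qf A n u < 0" by simp
  moreover have "qf A n u \<ge> 0" unfolding u_def using psd by simp
  ultimately show False by simp
qed

lemma is_walk_drop:
  assumes "is_walk E n xs" "i < length xs"
  shows "is_walk E n (drop i xs)"
  using assms unfolding is_walk_def by (auto dest: in_set_dropD simp: add.commute add.left_commute)

lemma is_walk_append:
  assumes "is_walk E n xs" "is_walk E n ys" "E (last xs) (hd ys)"
  shows "is_walk E n (xs @ ys)"
  unfolding is_walk_def
proof (intro conjI allI impI)
  show "xs @ ys \<noteq> []" using assms by (auto simp: is_walk_def)
  show "set (xs @ ys) \<subseteq> {..<n}" using assms by (auto simp: is_walk_def)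
  fix i assume i: "i + 1 < length (xs @ ys)"
  have xs: "xs \<noteq> []" and ys: "ys \<noteq> []" using assms by (auto simp: is_walk_def)
  consider "i + 1 < length xs" | "i + 1 = length xs" | "i \<ge> length xs" by linarith
  then show "E ((xs @ ys) ! i) ((xs @ ys) ! (i + 1))"
  proof cases
    case 1 thus ?thesis using assms(1) by (simp add: nth_append is_walk_def)
  next
    case 2
    hence ii: "i = length xs - 1" by simp
    hence "(xs @ ys) ! i = last xs" using xs 2 by (simp add: nth_append last_conv_nth)
    moreover have "(xs @ ys) ! (i+1) = hd ys" using 2 ys by (simp add: nth_append hd_conv_nth)
    ultimately show ?thesis using assms(3) by simp
  next
    case 3
    have "E (ys ! (i - length xs)) (ys ! (i - length xs + 1))"
      using assms(2) i 3 unfolding is_walk_def by auto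
    moreover have "i + 1 - length xs = i - length xs + 1" using 3 by simp
    ultimately show ?thesis using 3 by (simp add: nth_append)
  qed
qed

lemma is_walk_single: "x < n \<Longrightarrow> is_walk E n [x]"
  by (simp add: is_walk_def)

lemma is_walk_Cons:
  assumes "is_walk E n xs" "x < n" "E x (hd xs)"
  shows "is_walk E n (x # xs)"
  using is_walk_append[OF is_walk_single[OF assms(2)] assms(1)] assms(3) by simp

lemma is_walk_rev:
  assumes sym: "\<And>u v. u < n \<Longrightarrow> v < n \<Longrightarrow> E u v \<longleftrightarrow> E v u" and w: "is_walk E n xs"
  shows "is_walk E n (rev xs)"
  unfolding is_walk_def
proof (intro conjI allI impI)
  show "rev xs \<noteq> []" "set (rev xs) \<subseteq> {..<n}" using w by (auto simp: is_walk_def)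
  fix i assume i: "i + 1 < length (rev xs)"
  define j where "j = length xs - i - 2"
  have ij: "length xs - Suc i = j + 1" "length xs - Suc (i + 1) = j" "j + 1 < length xs"
    using i by (auto simp: j_def)
  have "E (xs ! j) (xs ! (j+1))" using w ij(3) by (auto simp: is_walk_def)
  moreover have "xs ! j \<in> set xs" "xs ! (j+1) \<in> set xs" using ij(3) by auto
  hence "xs ! j < n" "xs ! (j+1) < n" using w by (auto simp: is_walk_def)
  ultimately show "E (rev xs ! i) (rev xs ! (i + 1))" using i sym ij by (simp add: rev_nth)
qed

locale sgraph =
  fixes E :: "nat \<Rightarrow> nat \<Rightarrow> bool" and n :: nat
  assumes sym: "\<And>u v. u < n \<Longrightarrow> v < n \<Longrightarrow> E u v \<longleftrightarrow> E v u"
    and irrefl: "\<And>v. v < n \<Longrightarrow> \<not> E v v"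
    and conn: "connected_graph E n"
begin

abbreviation d where "d \<equiv> graph_dist E n"

lemma dist_walk:
  assumes "x < n" "y < n"
  shows "\<exists>xs. is_walk E n xs \<and> hd xs = x \<and> last xs = y \<and> length xs = d x y + 1"
proof -
  obtain xs where xs: "is_walk E n xs" "hd xs = x" "last xs = y" using conn assms
    unfolding connected_graph_def by blast
  have ne: "xs \<noteq> []" using xs by (simp add: is_walk_def)
  have ex: "\<exists>k xs. is_walk E n xs \<and> hd xs = x \<and> last xs = y \<and> length xs = k + 1"
    using xs ne by (intro exI[of _ "length xs - 1"] exI[of _ xs]) auto
  show ?thesis unfolding graph_dist_def by (rule LeastI_ex) (use ex in blast)
qed

lemma dist_le:
  assumes "is_walk E n xs" "hd xs = x" "last xs = y"
  shows "d x y + 1 \<le> length xs"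
proof -
  have ne: "xs \<noteq> []" using assms by (simp add: is_walk_def)
  have "d x y \<le> length xs - 1" unfolding graph_dist_def
    by (rule Least_le) (use assms ne in auto)
  thus ?thesis using ne by (cases xs) auto
qed

lemma dist_self: "x < n \<Longrightarrow> d x x = 0"
  using dist_le[of "[x]" x x] by (simp add: is_walk_def)

lemma dist_0: assumes "x < n" "y < n" "d x y = 0" shows "x = y"
proof -
  obtain xs where xs: "is_walk E n xs" "hd xs = x" "last xs = y" "length xs = d x y + 1"
    using dist_walk assms by blast
  then obtain z where "xs = [z]" using assms(3) by (cases xs) auto
  thus ?thesis using xs by simp
qed

lemma dist_edge: assumes "x < n" "y < n" "E x y" shows "d x y = 1"
proof -
  have "is_walk E n [x, y]" using assms by (auto simp: is_walk_def nth_Cons split: nat.splits)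
  hence "d x y \<le> 1" using dist_le[of "[x,y]" x y] by simp
  moreover have "x \<noteq> y" using irrefl assms by auto
  hence "d x y \<noteq> 0" using dist_0 assms by auto
  ultimately show ?thesis by simp
qed

lemma dist_sym: assumes "x < n" "y < n" shows "d x y = d y x"
proof -
  have le: "d v u \<le> d u v" if "u < n" "v < n" for u v
  proof -
    from dist_walk[OF that] obtain xs where xs: "is_walk E n xs" "hd xs = u" "last xs = v" "length xs = d u v + 1"
      by blast
    have ne: "xs \<noteq> []" using xs by (simp add: is_walk_def)
    have "d v u + 1 \<le> length (rev xs)"
      by (rule dist_le) (use is_walk_rev[OF sym xs(1)] xs ne in \<open>auto simp: hd_rev last_rev\<close>)
    thus ?thesis using xs by simp
  qed
  show ?thesis using le[of x y] le[of y x] assms by simp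
qed

lemma dist_triangle: assumes "x < n" "y < n" "z < n" shows "d x z \<le> d x y + d y z"
proof -
  obtain xs where xs: "is_walk E n xs" "hd xs = x" "last xs = y" "length xs = d x y + 1"
    using dist_walk assms by blast
  obtain ys where ys: "is_walk E n ys" "hd ys = y" "last ys = z" "length ys = d y z + 1"
    using dist_walk assms by blast
  show ?thesis
  proof (cases "tl ys = []")
    case True
    hence "ys = [y]" using ys by (cases ys) auto
    hence "z = y" using ys by simp
    thus ?thesis using assms by (simp add: dist_self)
  next
    case False
    have ne: "xs \<noteq> []" "ys \<noteq> []" using xs ys by (auto simp: is_walk_def)
    have tw: "is_walk E n (tl ys)" using is_walk_drop[OF ys(1), of 1] False by (cases ys) auto
    have "E (last xs) (hd (tl ys))" using ys(1) False xs(3) ys(2) unfolding is_walk_def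
      by (cases ys; cases "tl ys") auto
    hence w: "is_walk E n (xs @ tl ys)" by (rule is_walk_append[OF xs(1) tw])
    have "d x z + 1 \<le> length (xs @ tl ys)"
      by (rule dist_le[OF w]) (use ne False xs ys in \<open>auto simp: last_tl\<close>)
    thus ?thesis using xs ys by simp
  qed
qed

lemma dist_step: assumes "x < n" "y < n" "z < n" "E x y" shows "d x z \<le> d y z + 1"
  using dist_triangle[of x y z] dist_edge[of x y] assms by simp

lemma cut_lemma:
  assumes cut: "\<And>s v. s \<in> S \<Longrightarrow> v < n \<Longrightarrow> v \<notin> S \<Longrightarrow> E s v \<Longrightarrow> v = u"
    and w: "w \<in> S" "w < n" and z: "z \<notin> S" "z < n" and u: "u < n"
  shows "d u z + 1 \<le> d w z"
proof -
  obtain xs where xs: "is_walk E n xs" "hd xs = w" "last xs = z" "length xs = d w z + 1"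
    using dist_walk w z by blast
  have ne: "xs \<noteq> []" using xs by (simp add: is_walk_def)
  have ex: "\<exists>i. i < length xs \<and> xs ! i \<notin> S"
    using xs ne z by (intro exI[of _ "length xs - 1"]) (auto simp: last_conv_nth)
  define i where "i = (LEAST i. i < length xs \<and> xs ! i \<notin> S)"
  have i: "i < length xs" "xs ! i \<notin> S" using LeastI_ex[OF ex] unfolding i_def by auto
  have i0: "i \<noteq> 0" using i xs(2) w ne by (metis hd_conv_nth)
  have prev: "xs ! (i - 1) \<in> S"
  proof (rule ccontr)
    assume a: "xs ! (i - 1) \<notin> S"
    have "i \<le> i - 1" unfolding i_def by (rule Least_le) (use a i in \<open>auto simp: i_def\<close>)
    thus False using i0 by simp
  qed
  have "E (xs ! (i-1)) (xs ! (i - 1 + 1))" using xs(1) i i0 unfolding is_walk_def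
    by (metis One_nat_def Suc_pred add.commute less_Suc_eq_0_disj not_less_eq plus_1_eq_Suc)
  hence edge: "E (xs ! (i-1)) (xs ! i)" using i0 by simp
  have "xs ! i \<in> set xs" using i by simp
  hence "xs ! i < n" using xs(1) by (auto simp: is_walk_def)
  hence xi: "xs ! i = u" using cut[OF prev _ i(2) edge] by simp
  have "d u z + 1 \<le> length (drop i xs)"
    by (rule dist_le[OF is_walk_drop[OF xs(1) i(1)]]) (use i xi xs in \<open>auto simp: hd_drop_conv_nth\<close>)
  thus ?thesis using xs i0 by simp
qed

end

locale U3 = sgraph E n for E n +
  fixes a b c :: nat
  assumes n_gt: "n > 2"
    and tri: "a < n" "b < n" "c < n" "distinct [a, b, c]" "E a b" "E b c" "E c a"
    and unique_cycle: "\<And>xs. is_cycle E n xs \<Longrightarrow> set xs = {a, b, c}"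
    and deg_b: "degree E n b = 2" and deg_c: "degree E n c = 2"
begin

lemma abc: "a \<noteq> b" "a \<noteq> c" "b \<noteq> c" "b \<noteq> a" "c \<noteq> a" "c \<noteq> b" using tri(4) by auto

lemma edges: "E a b" "E b a" "E b c" "E c b" "E c a" "E a c"
  using tri sym by auto

definition h where "h x = d a x"

lemma h_a: "h a = 0" by (simp add: h_def dist_self tri)
lemma h_b: "h b = 1" using dist_edge[of a b] tri edges by (simp add: h_def)
lemma h_c: "h c = 1" using dist_edge[of a c] tri edges by (simp add: h_def)

lemma h0: "x < n \<Longrightarrow> h x = 0 \<Longrightarrow> x = a" using dist_0[of a x] tri by (simp add: h_def)

lemma h_edge: "x < n \<Longrightarrow> y < n \<Longrightarrow> E x y \<Longrightarrow> h y \<le> h x + 1"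
  using dist_triangle[of a x y] dist_edge[of x y] tri by (simp add: h_def)

lemma nb2:
  assumes deg: "degree E n v = 2" and v: "v < n" and p: "p < n" "E v p" and q: "q < n" "E v q" and pq: "p \<noteq> q"
    and w: "w < n" "E v w"
  shows "w = p \<or> w = q"
proof -
  have sub: "{p, q} \<subseteq> {w. w < n \<and> E v w}" using p q by auto
  have fin: "finite {w. w < n \<and> E v w}" by simp
  have "card {p, q} = 2" using pq by simp
  hence "{p, q} = {w. w < n \<and> E v w}" using card_subset_eq[OF fin sub] deg by (simp add: degree_def)
  thus ?thesis using w by auto
qed

lemma nb_b: "v < n \<Longrightarrow> E b v \<Longrightarrow> v = a \<or> v = c"
  using nb2[OF deg_b tri(2) tri(1) edges(2) tri(3) edges(3) abc(2)] by blast

lemma nb_c: "v < n \<Longrightarrow> E c v \<Longrightarrow> v = a \<or> v = b"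
  using nb2[OF deg_c tri(3) tri(1) edges(5) tri(2) edges(4) abc(1)] by blast

lemma lower_ex:
  assumes x: "x < n" "x \<noteq> a"
  shows "\<exists>v. v < n \<and> E x v \<and> h v + 1 = h x"
proof -
  obtain xs where xs: "is_walk E n xs" "hd xs = a" "last xs = x" "length xs = d a x + 1"
    using dist_walk tri x by blast
  have hx: "h x \<noteq> 0" using h0 x by blast
  define m where "m = length xs - 2"
  have m: "length xs = m + 2" using xs hx by (simp add: m_def h_def)
  define v where "v = xs ! m"
  have setx: "set xs \<subseteq> {..<n}" using xs by (simp add: is_walk_def)
  have "v \<in> set xs" using m by (simp add: v_def)
  hence v: "v < n" using setx by auto
  have xsne: "xs \<noteq> []" using m by auto
  have lastx: "xs ! (m + 1) = x" using xs(3) last_conv_nth[OF xsne] m by simp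
  have lt: "m + 1 < length xs" using m by simp
  have "E (xs ! m) (xs ! (m + 1))" using xs(1) lt unfolding is_walk_def by blast
  hence "E v x" using lastx by (simp add: v_def)
  hence Exv: "E x v" using sym v x by auto
  have tw: "is_walk E n (take (m + 1) xs)" using xs(1) m unfolding is_walk_def
    by (auto dest: in_set_takeD)
  have "d a v + 1 \<le> length (take (m + 1) xs)"
  proof (rule dist_le[OF tw])
    show "hd (take (m + 1) xs) = a" using xs m by (simp add: hd_take)
    have "take (m + 1) xs \<noteq> []" using m by (cases xs) auto
    hence "last (take (m + 1) xs) = take (m + 1) xs ! m"
      using m by (simp add: last_conv_nth)
    also have "\<dots> = v" using m by (simp add: v_def)
    finally show "last (take (m + 1) xs) = v" .
  qed
  hence "h v + 1 \<le> h x" using xs m by (simp add: h_def)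
  moreover have "h x \<le> h v + 1" using h_edge[OF v x(1) \<open>E v x\<close>] .
  ultimately show ?thesis using v Exv by (intro exI[of _ v]) auto
qed

definition par where "par x = (if x = a then a else (SOME v. v < n \<and> E x v \<and> h v + 1 = h x))"

lemma par: assumes "x < n" "x \<noteq> a" shows "par x < n" "E x (par x)" "h (par x) + 1 = h x"
  using someI_ex[OF lower_ex[OF assms]] assms unfolding par_def by auto

lemma par_a: "par a = a" by (simp add: par_def)

lemma par_lt: "x < n \<Longrightarrow> par x < n" using par(1)[of x] par_a tri by (cases "x = a") auto

lemma h_par: "x < n \<Longrightarrow> h (par x) = h x - 1" using par(3)[of x] par_a h_a by (cases "x = a") auto

abbreviation chain where "chain x i \<equiv> (par ^^ i) x"

lemma chain_lt: "x < n \<Longrightarrow> chain x i < n"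
  by (induction i) (auto simp: par_lt)

lemma chain_h: "x < n \<Longrightarrow> h (chain x i) = h x - i"
  by (induction i) (auto simp: h_par chain_lt)

lemma chain_edge: assumes "x < n" "i < h x" shows "E (chain x i) (chain x (Suc i))"
proof -
  have "chain x i \<noteq> a" using chain_h[OF assms(1), of i] assms(2) h_a by auto
  thus ?thesis using par(2)[OF chain_lt[OF assms(1)]] by simp
qed

lemma chain_walk: assumes "x < n" "m \<le> h x + 1" "m \<ge> 1" shows "is_walk E n (map (chain x) [0..<m])"
  unfolding is_walk_def using assms chain_lt chain_edge by auto

lemma cyc_core:
  assumes u: "u1 < n" "u2 < n" "u1 \<noteq> u2" "h u1 = h u2"
  shows "\<exists>L. is_walk E n L \<and> distinct L \<and> hd L = u1 \<and> last L = u2 \<and> length L \<ge> 3 \<and>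
    (\<forall>z\<in>set L. h z \<le> h u1) \<and> u1 \<in> set L"
proof -
  have exk: "\<exists>k. chain u1 k = chain u2 k"
  proof -
    have "h (chain u1 (h u1)) = 0" "h (chain u2 (h u1)) = 0" using chain_h u by auto
    hence "chain u1 (h u1) = a" "chain u2 (h u1) = a" using h0 chain_lt u by auto
    thus ?thesis by metis
  qed
  define k where "k = (LEAST k. chain u1 k = chain u2 k)"
  have k: "chain u1 k = chain u2 k" using LeastI_ex[OF exk] unfolding k_def .
  have kmin: "\<And>j. j < k \<Longrightarrow> chain u1 j \<noteq> chain u2 j" unfolding k_def using not_less_Least by blast
  have k0: "k \<noteq> 0"
  proof
    assume "k = 0"
    with k have "u1 = u2" by simp
    with u(3) show False by simp
  qed
  have kh: "k \<le> h u1"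
  proof (rule ccontr)
    assume "\<not> k \<le> h u1"
    hence "chain u1 (h u1) \<noteq> chain u2 (h u1)" using kmin by simp
    moreover have "h (chain u1 (h u1)) = 0" "h (chain u2 (h u1)) = 0" using chain_h u by auto
    hence "chain u1 (h u1) = a" "chain u2 (h u1) = a" using h0 chain_lt u by auto
    ultimately show False by simp
  qed
  define L1 where "L1 = map (chain u1) [0..<k+1]"
  define L2 where "L2 = map (chain u2) [0..<k]"
  define L where "L = L1 @ rev L2"
  have w1: "is_walk E n L1" unfolding L1_def by (rule chain_walk) (use u kh in auto)
  have w2: "is_walk E n L2" unfolding L2_def by (rule chain_walk) (use u kh k0 in auto)
  have last1: "last L1 = chain u2 k" using k by (simp add: L1_def)
  have hd2: "hd (rev L2) = chain u2 (k - 1)" using k0 by (simp add: L2_def last_map hd_rev)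
  have "E (chain u2 (k-1)) (chain u2 (Suc (k-1)))" by (rule chain_edge) (use u kh k0 in auto)
  hence "E (chain u2 k) (chain u2 (k-1))" using sym chain_lt u k0 by auto
  hence jn: "E (last L1) (hd (rev L2))" unfolding last1 hd2 .
  have wL: "is_walk E n L" unfolding L_def
    by (rule is_walk_append[OF w1 is_walk_rev[OF sym w2] jn])
  have hc1: "h (chain u1 i) = h u1 - i" for i using chain_h u by simp
  have hc2: "h (chain u2 i) = h u1 - i" for i using chain_h u by simp
  have inj1: "i = j" if "chain u1 i = chain u1 j" "i \<le> k" "j \<le> k" for i j
  proof -
    have "h u1 - i = h u1 - j" using that(1) hc1 by metis
    thus ?thesis using that kh by linarith
  qed
  have inj2: "i = j" if "chain u2 i = chain u2 j" "i \<le> k" "j \<le> k" for i j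
  proof -
    have "h u1 - i = h u1 - j" using that(1) hc2 by metis
    thus ?thesis using that kh by linarith
  qed
  have cross: False if "chain u1 i = chain u2 j" "i \<le> k" "j < k" for i j
  proof -
    have "h u1 - i = h u1 - j" using that(1) hc1 hc2 by metis
    hence "i = j" using that kh by linarith
    thus False using kmin that by auto
  qed
  have "inj_on (chain u1) {0..<k+1}" by (rule inj_onI) (rule inj1, auto)
  hence d1: "distinct L1" unfolding L1_def distinct_map by (simp del: upt_Suc)
  have "inj_on (chain u2) {0..<k}" by (rule inj_onI) (rule inj2, auto)
  hence d2: "distinct L2" unfolding L2_def distinct_map by (simp del: upt_Suc)
  have d12: "set L1 \<inter> set L2 = {}" unfolding L1_def L2_def using cross by fastforce
  have dL: "distinct L" unfolding L_def using d1 d2 d12 by auto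
  have "[0..<k+1] = 0 # [1..<k+1]" by (simp add: upt_rec)
  hence hdL: "hd L = u1" by (simp add: L_def L1_def del: upt_Suc)
  have "[0..<k] = 0 # [1..<k]" using k0 by (simp add: upt_rec)
  hence lastL: "last L = u2" using k0 by (simp add: L_def L2_def last_rev del: upt_Suc)
  have lenL: "length L \<ge> 3" using k0 by (simp add: L_def L1_def L2_def)
  have hL: "\<forall>z\<in>set L. h z \<le> h u1" unfolding L_def L1_def L2_def using hc1 hc2 by auto
  have "u1 \<in> set L" using hdL wL by (metis hd_in_set is_walk_def)
  thus ?thesis using wL dL hdL lastL lenL hL by blast
qed

definition V' where "V' = {x. x < n \<and> x \<noteq> a \<and> x \<noteq> b \<and> x \<noteq> c}"

lemma V'_not_b: assumes "w \<in> V'" "v < n" "E w v" shows "v \<noteq> b \<and> v \<noteq> c"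
proof -
  have w: "w < n" "w \<noteq> a" "w \<noteq> b" "w \<noteq> c" using assms(1) by (auto simp: V'_def)
  have "E v w" using sym assms w by auto
  thus ?thesis using nb_b[OF w(1)] nb_c[OF w(1)] w by auto
qed

lemma lower_unique:
  assumes w: "w \<in> V'" and v: "v < n" "E w v" "h v + 1 = h w"
  shows "v = par w"
proof (rule ccontr)
  assume ne: "v \<noteq> par w"
  have wn: "w < n" "w \<noteq> a" using w by (auto simp: V'_def)
  note pw = par[OF wn]
  obtain L where L: "is_walk E n L" "distinct L" "hd L = v" "last L = par w" "length L \<ge> 3"
    "\<forall>z\<in>set L. h z \<le> h v" using cyc_core[OF v(1) pw(1) ne] v(3) pw(3) by auto
  have wL: "w \<notin> set L" using L(6) v(3) by fastforce
  have Lne: "L \<noteq> []" using L by (simp add: is_walk_def)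
  have "is_cycle E n (w # L)" unfolding is_cycle_def
    using L wL Lne is_walk_Cons[OF L(1) wn(1)] v(2) sym[OF wn(1) pw(1)] pw(2) by auto
  hence "set (w # L) = {a, b, c}" by (rule unique_cycle)
  thus False using w by (auto simp: V'_def)
qed

lemma no_equal_nb:
  assumes w: "w \<in> V'" and v: "v < n" "E w v" "h v = h w"
  shows False
proof -
  have wn: "w < n" using w by (auto simp: V'_def)
  have ne: "w \<noteq> v" using irrefl wn v by auto
  obtain L where L: "is_walk E n L" "distinct L" "hd L = w" "last L = v" "length L \<ge> 3" "w \<in> set L"
    using cyc_core[OF wn v(1) ne] v(3) by auto
  have "is_cycle E n L" unfolding is_cycle_def using L v sym wn by auto
  hence "set L = {a, b, c}" by (rule unique_cycle)
  thus False using w L(6) by (auto simp: V'_def)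
qed

lemma nb_V':
  assumes w: "w \<in> V'" and v: "v < n" "E w v"
  shows "v = par w \<or> (v \<in> V' \<and> par v = w)"
proof -
  have wn: "w < n" "w \<noteq> a" using w by (auto simp: V'_def)
  have h1: "h v \<le> h w + 1" using h_edge[OF wn(1) v] .
  have h2: "h w \<le> h v + 1" using h_edge[OF v(1) wn(1)] sym v wn by auto
  consider "h v + 1 = h w" | "h v = h w" | "h v = h w + 1" using h1 h2 by linarith
  then show ?thesis
  proof cases
    case 1 thus ?thesis using lower_unique[OF w v] by simp
  next
    case 2 thus ?thesis using no_equal_nb[OF w v] by simp
  next
    case 3
    have "v \<noteq> a" using 3 h_a by auto
    hence vV: "v \<in> V'" using V'_not_b[OF w v] v by (auto simp: V'_def)
    have "E v w" using sym v wn by auto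
    hence "w = par v" using lower_unique[OF vV wn(1)] 3 by simp
    thus ?thesis using vV by simp
  qed
qed

lemma par_V': assumes "w \<in> V'" shows "par w \<in> V' \<or> par w = a"
proof -
  have wn: "w < n" "w \<noteq> a" using assms by (auto simp: V'_def)
  show ?thesis using par[OF wn] V'_not_b[OF assms, of "par w"] by (auto simp: V'_def)
qed

lemma par_b: "par b = a"
proof -
  have bn: "b < n" "b \<noteq> a" using tri abc by auto
  note pb = par[OF bn]
  have "par b = a \<or> par b = c" using nb_b pb by auto
  moreover have "par b \<noteq> c" using pb(3) h_b h_c by auto
  ultimately show ?thesis by simp
qed

end

context U3 begin

lemma chain_a: "chain a i = a" by (induction i) (auto simp: par_a)

definition sub where "sub y = {x \<in> V'. \<exists>k. chain x k = y}"

lemma V'D: "x \<in> V' \<Longrightarrow> x < n \<and> x \<noteq> a \<and> x \<noteq> b \<and> x \<noteq> c" by (simp add: V'_def)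

lemma h_V': "x \<in> V' \<Longrightarrow> h x \<ge> 1" using h0 V'D by fastforce

lemma s1: "y \<in> V' \<Longrightarrow> y \<in> sub y" unfolding sub_def by (auto intro: exI[of _ 0])

lemma sub_V': "x \<in> sub y \<Longrightarrow> x \<in> V'" unfolding sub_def by auto

lemma s2: assumes y: "y \<in> V'" and x: "x \<in> sub y" "x \<noteq> y" shows "par x \<in> sub y"
proof -
  obtain k where k: "chain x k = y" and xV: "x \<in> V'" using x unfolding sub_def by auto
  have k0: "k \<noteq> 0" using k x(2) by (cases k) auto
  have "chain x (Suc (k - 1)) = chain (par x) (k - 1)" by (simp only: funpow_Suc_right o_apply)
  hence ck: "chain (par x) (k - 1) = y" using k k0 by simp
  have "par x \<noteq> a" using ck chain_a y V'D by metis
  hence "par x \<in> V'" using par_V'[OF xV] by simp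
  thus ?thesis using ck unfolding sub_def by auto
qed

lemma s3: assumes x: "x \<in> V'" and p: "par x \<in> sub y" shows "x \<in> sub y"
proof -
  obtain k where k: "chain (par x) k = y" using p unfolding sub_def by auto
  moreover have "chain x (Suc k) = chain (par x) k" by (simp only: funpow_Suc_right o_apply)
  ultimately have "chain x (Suc k) = y" by simp
  thus ?thesis using x unfolding sub_def by blast
qed

lemma s4: assumes y: "y \<in> V'" and x: "x \<in> sub y" shows "h y \<le> h x" "h x = h y \<Longrightarrow> x = y"
proof -
  obtain k where k: "chain x k = y" and xV: "x \<in> V'" using x unfolding sub_def by auto
  have hk: "h y = h x - k" using chain_h[of x k] k V'D[OF xV] by simp
  show "h y \<le> h x" using hk by simp
  assume "h x = h y"
  moreover have "h y \<ge> 1" using h_V'[OF y] .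
  ultimately have "k = 0" using hk by linarith
  thus "x = y" using k by simp
qed

lemma sub_par: assumes y: "y \<in> V'" "par y \<in> V'" shows "sub y \<subseteq> sub (par y)"
proof
  fix x assume "x \<in> sub y"
  then obtain k where k: "chain x k = y" and xV: "x \<in> V'" unfolding sub_def by auto
  hence "chain x (Suc k) = par y" by simp
  thus "x \<in> sub (par y)" using xV unfolding sub_def by blast
qed

lemma cut_sub: assumes y: "y \<in> V'" and s: "s \<in> sub y" and v: "v < n" "v \<notin> sub y" "E s v"
  shows "v = par y \<and> s = y"
proof -
  have sV: "s \<in> V'" using sub_V'[OF s] .
  from nb_V'[OF sV v(1) v(3)] show ?thesis
  proof
    assume vp: "v = par s"
    have "s = y" using s2[OF y s] v(2) vp by blast
    thus ?thesis using vp by simp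
  next
    assume "v \<in> V' \<and> par v = s"
    hence "v \<in> sub y" using s3[of v y] s by auto
    thus ?thesis using v(2) by simp
  qed
qed

lemma T2out: assumes y: "y \<in> V'" and z: "z < n" "z \<notin> sub y"
  shows "d y z = d (par y) z + 1"
proof -
  have yn: "y < n" "y \<noteq> a" using V'D[OF y] by auto
  have "d (par y) z + 1 \<le> d y z"
    by (rule cut_lemma[where S = "sub y"]) (use cut_sub[OF y] s1[OF y] z yn par_lt in auto)
  moreover have "d y z \<le> d (par y) z + 1" using dist_step[OF yn(1) par(1)[OF yn] z(1) par(2)[OF yn]] .
  ultimately show ?thesis by simp
qed

lemma T2in: assumes y: "y \<in> V'" and z: "z \<in> sub y"
  shows "d (par y) z = d y z + 1"
proof -
  have yn: "y < n" "y \<noteq> a" using V'D[OF y] by auto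
  have zn: "z < n" using V'D[OF sub_V'[OF z]] by simp
  have py: "par y < n" "par y \<notin> sub y" using par[OF yn] s4(1)[OF y, of "par y"] by auto
  have cut: "v = y" if "s \<in> {x. x < n \<and> x \<notin> sub y}" "v < n" "v \<notin> {x. x < n \<and> x \<notin> sub y}" "E s v" for s v
  proof -
    have "v \<in> sub y" "s < n" "s \<notin> sub y" using that by auto
    moreover have "E v s" using sym that by auto
    ultimately show ?thesis using cut_sub[OF y] by blast
  qed
  have "d y z + 1 \<le> d (par y) z"
    by (rule cut_lemma[where S = "{x. x < n \<and> x \<notin> sub y}"]) (use cut py z zn yn in auto)
  moreover have "d (par y) z \<le> d y z + 1"
    using dist_step[OF par(1)[OF yn] yn(1) zn] par(2)[OF yn] sym yn par(1)[OF yn] by auto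
  ultimately show ?thesis by simp
qed

lemma d_b: assumes z: "z < n" "z \<noteq> b" "z \<noteq> c" shows "d b z = h z + 1" "d c z = h z + 1"
proof -
  have cut: "v = a" if "s \<in> {b, c}" "v < n" "v \<notin> {b, c}" "E s v" for s v
    using that nb_b nb_c by auto
  have "d a z + 1 \<le> d b z" by (rule cut_lemma[where S = "{b,c}"]) (use cut z tri in auto)
  moreover have "d b z \<le> d a z + 1" using dist_step[of b a z] tri z edges by simp
  ultimately show "d b z = h z + 1" by (simp add: h_def)
  have "d a z + 1 \<le> d c z" by (rule cut_lemma[where S = "{b,c}"]) (use cut z tri in auto)
  moreover have "d c z \<le> d a z + 1" using dist_step[of c a z] tri z edges by simp
  ultimately show "d c z = h z + 1" by (simp add: h_def)
qed

lemma d_bc: "d b c = 1" "d c b = 1" "d a b = 1" "d b a = 1" "d a c = 1" "d c a = 1"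
  using dist_edge tri edges by auto

end

context U3 begin

definition D2 :: "nat \<Rightarrow> nat \<Rightarrow> real" where "D2 x y = real ((d x y)^2)"

definition Cf :: "nat \<Rightarrow> (nat \<Rightarrow> real) \<Rightarrow> real" where
  "Cf v F = (if v = a then F a else if v = c then F c - F b else if par v = a then F a - F v
     else 2 * F (par v) - F v - F (par (par v)))"

definition Gf where "Gf v w = Cf v (\<lambda>x. Cf w (\<lambda>y. D2 x y))"

definition subb where "subb w = (if w = b then {b} else sub w)"

lemma Cf_comm: "Cf v (\<lambda>x. Cf w (\<lambda>y. D x y)) = Cf w (\<lambda>y. Cf v (\<lambda>x. D x y))"
  unfolding Cf_def by (simp add: algebra_simps)

lemma D2_sym: "x < n \<Longrightarrow> y < n \<Longrightarrow> D2 x y = D2 y x" by (simp add: D2_def dist_sym)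

lemma Cf_cong: "(\<And>x. x < n \<Longrightarrow> F x = F' x) \<Longrightarrow> v < n \<Longrightarrow> Cf v F = Cf v F'"
  unfolding Cf_def using tri par_lt by auto

lemma Gf_sym: assumes "v < n" "w < n" shows "Gf v w = Gf w v"
proof -
  have "Gf w v = Cf v (\<lambda>y. Cf w (\<lambda>x. D2 x y))" unfolding Gf_def by (rule Cf_comm)
  also have "\<dots> = Cf v (\<lambda>y. Cf w (\<lambda>x. D2 y x))"
    by (rule Cf_cong[OF _ assms(1)], rule Cf_cong[OF _ assms(2)]) (simp add: D2_sym)
  finally show ?thesis by (simp add: Gf_def)
qed

lemma D2_a: "x < n \<Longrightarrow> D2 a x = real ((h x)^2)" "x < n \<Longrightarrow> D2 x a = real ((h x)^2)"
  by (auto simp: D2_def h_def dist_sym tri)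

lemma V'_par_info: assumes "w \<in> V'" "par w \<noteq> a"
  shows "par w \<in> V'" "h w = h (par w) + 1" "h (par w) = h (par (par w)) + 1" "h (par w) \<ge> 1"
proof -
  show pV: "par w \<in> V'" using par_V'[OF assms(1)] assms(2) by simp
  show "h w = h (par w) + 1" using par(3)[of w] V'D[OF assms(1)] by simp
  show "h (par w) = h (par (par w)) + 1" using par(3)[of "par w"] V'D[OF pV] by simp
  show "h (par w) \<ge> 1" using h_V'[OF pV] .
qed

lemma Gf_a_a: "Gf a a = 0" by (simp add: Gf_def Cf_def D2_def dist_self tri)

lemma Gf_a_c: "Gf a c = 0" using abc by (simp add: Gf_def Cf_def D2_def d_bc)

lemma Gf_a_root: assumes "w < n" "w \<noteq> a" "w \<noteq> c" "par w = a" shows "Gf a w = -1"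
proof -
  have "h w = 1" using par(3)[of w] assms h_a by simp
  thus ?thesis using assms by (simp add: Gf_def Cf_def D2_a tri h_a)
qed

lemma Gf_a_deep: assumes "w \<in> V'" "par w \<noteq> a" shows "Gf a w = -2"
proof -
  note i = V'_par_info[OF assms]
  have n: "w < n" "par w < n" "par (par w) < n" using V'D[OF assms(1)] V'D[OF i(1)] par_lt by auto
  have ne: "w \<noteq> a" "w \<noteq> c" using V'D[OF assms(1)] by auto
  have "Gf a w = 2 * real ((h (par w))^2) - real ((h w)^2) - real ((h (par (par w)))^2)"
    using n ne assms(2) by (simp add: Gf_def Cf_def D2_a)
  also have "\<dots> = -2" using i(2,3) by (simp add: power2_eq_square algebra_simps)
  finally show ?thesis .
qed

lemma Gf_c_c: "Gf c c = -2" using abc by (simp add: Gf_def Cf_def D2_def d_bc dist_self tri)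

lemma Gf_c_b: "Gf c b = -1"
proof -
  have "Gf c b = (D2 c a - D2 b a) - (D2 c b - D2 b b)" using abc par_b by (simp add: Gf_def Cf_def)
  thus ?thesis by (simp add: D2_def d_bc dist_self tri)
qed

lemma Gf_c_V': assumes w: "w \<in> V'" shows "Gf c w = 0"
proof -
  have F0: "D2 c y - D2 b y = 0" if "y < n" "y \<noteq> b" "y \<noteq> c" for y
    using d_b[OF that] by (simp add: D2_def)
  have wn: "w < n" "w \<noteq> a" "w \<noteq> b" "w \<noteq> c" using V'D[OF w] by auto
  have "Gf c w = Cf w (\<lambda>y. D2 c y - D2 b y)" using abc by (simp add: Gf_def Cf_def)
  also have "\<dots> = 0"
  proof (cases "par w = a")
    case True thus ?thesis using wn F0[of a] F0[of w] tri abc by (simp add: Cf_def)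
  next
    case False
    note i = V'_par_info[OF w False]
    have "par (par w) \<in> V' \<or> par (par w) = a" using par_V'[OF i(1)] .
    hence "par (par w) < n" "par (par w) \<noteq> b" "par (par w) \<noteq> c" using V'D tri abc by auto
    moreover have "par w < n" "par w \<noteq> b" "par w \<noteq> c" using V'D[OF i(1)] by auto
    ultimately show ?thesis using wn False F0 by (simp add: Cf_def)
  qed
  finally show ?thesis .
qed

end

context U3 begin

lemma gA: assumes w: "w < n" "w \<noteq> a" "w \<noteq> c" "par w = a" and x: "x < n" "x \<noteq> c"
  shows "Cf w (\<lambda>y. D2 x y) = - (2 * real (h x) + 1) + (if x \<in> subb w then 4 * real (h x) else 0)"
proof -
  have Cf: "Cf w (\<lambda>y. D2 x y) = D2 x a - D2 x w" using w by (simp add: Cf_def)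
  have Da: "D2 x a = real (h x) * real (h x)" using D2_a(2)[OF x(1)] by (simp add: power2_eq_square)
  show ?thesis
  proof (cases "w = b")
    case True
    show ?thesis
    proof (cases "x = b")
      case True
      have "D2 x w = 0" using \<open>w = b\<close> True by (simp add: D2_def dist_self tri)
      thus ?thesis using \<open>w = b\<close> True Cf Da h_b by (simp add: subb_def)
    next
      case False
      have "d x b = h x + 1" using d_b(1)[OF x(1) False x(2)] dist_sym x tri by simp
      hence "D2 x w = (real (h x) + 1) * (real (h x) + 1)" using \<open>w = b\<close> by (simp add: D2_def power2_eq_square algebra_simps)
      thus ?thesis using \<open>w = b\<close> False Cf Da by (simp add: subb_def algebra_simps)
    qed
  next
    case False
    hence wV: "w \<in> V'" using w by (simp add: V'_def)
    show ?thesis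
    proof (cases "x \<in> sub w")
      case True
      have "d a x = d w x + 1" using T2in[OF wV True] w by simp
      hence "h x = d x w + 1" using dist_sym x w by (simp add: h_def)
      hence "D2 x w = (real (h x) - 1) * (real (h x) - 1)" by (simp add: D2_def power2_eq_square)
      thus ?thesis using True False Cf Da by (simp add: subb_def algebra_simps)
    next
      case nt: False
      have "d w x = d a x + 1" using T2out[OF wV x(1) nt] w by simp
      hence "d x w = h x + 1" using dist_sym x w by (simp add: h_def)
      hence "D2 x w = (real (h x) + 1) * (real (h x) + 1)" by (simp add: D2_def power2_eq_square algebra_simps)
      thus ?thesis using nt False Cf Da by (simp add: subb_def algebra_simps)
    qed
  qed
qed

lemma gB: assumes w: "w \<in> V'" "par w \<noteq> a" and x: "x < n"
  shows "Cf w (\<lambda>y. D2 x y) = -2 - (if x \<in> sub (par w) \<and> x \<notin> sub w then 4 * real (d (par w) x) else 0)"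
proof -
  note i = V'_par_info[OF w]
  have wn: "w \<noteq> a" "w \<noteq> c" using V'D[OF w(1)] by auto
  have pn: "par w < n" "par (par w) < n" using V'D[OF i(1)] par_lt by auto
  have wn': "w < n" using V'D[OF w(1)] by simp
  have Cf: "Cf w (\<lambda>y. D2 x y) = 2 * D2 x (par w) - D2 x w - D2 x (par (par w))"
    using w wn by (simp add: Cf_def)
  have dd: "D2 x y = real ((d y x)^2)" if "y < n" for y using dist_sym[OF x that] by (simp add: D2_def)
  show ?thesis
  proof (cases "x \<in> sub w")
    case True
    have xP: "x \<in> sub (par w)" using sub_par[OF w(1) i(1)] True by auto
    have e1: "d (par w) x = d w x + 1" using T2in[OF w(1) True] .
    have e2: "d (par (par w)) x = d (par w) x + 1" using T2in[OF i(1) xP] .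
    show ?thesis using Cf True xP e1 e2 pn wn'
      by (simp add: dd power2_eq_square algebra_simps)
  next
    case nw: False
    show ?thesis
    proof (cases "x \<in> sub (par w)")
      case True
      have e1: "d w x = d (par w) x + 1" using T2out[OF w(1) x nw] .
      have e2: "d (par (par w)) x = d (par w) x + 1" using T2in[OF i(1) True] .
      show ?thesis using Cf True nw e1 e2 pn wn'
        by (simp add: dd power2_eq_square algebra_simps)
    next
      case False
      have e1: "d w x = d (par w) x + 1" using T2out[OF w(1) x nw] .
      have e2: "d (par w) x = d (par (par w)) x + 1" using T2out[OF i(1) x False] .
      show ?thesis using Cf False nw e1 e2 pn wn'
        by (simp add: dd power2_eq_square algebra_simps)
    qed
  qed
qed

lemma subb_root_h1: assumes w: "w < n" "w \<noteq> a" "w \<noteq> c" "par w = a" and v: "v \<in> subb w" "h v = 1"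
  shows "v = w"
proof (cases "w = b")
  case True thus ?thesis using v by (simp add: subb_def)
next
  case False
  hence wV: "w \<in> V'" using w by (simp add: V'_def)
  have "h w = 1" using par(3)[of w] w h_a by simp
  thus ?thesis using s4(2)[OF wV] v False by (simp add: subb_def)
qed

lemma root_h1: "w < n \<Longrightarrow> w \<noteq> a \<Longrightarrow> par w = a \<Longrightarrow> h w = 1"
  using par(3)[of w] h_a by simp

lemma a_notin_subb: "a \<notin> subb w" using sub_V' V'D by (auto simp: subb_def abc)

lemma Gf_root_root: assumes v: "v < n" "v \<noteq> a" "v \<noteq> c" "par v = a" and w: "w < n" "w \<noteq> a" "w \<noteq> c" "par w = a"
  shows "Gf v w = (if v = w then -2 else 2)"
proof -
  have g1: "Cf w (\<lambda>y. D2 a y) = -1" using gA[OF w, of a] tri abc h_a a_notin_subb by simp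
  have hv: "h v = 1" using root_h1 v by simp
  have "v \<in> subb w \<longleftrightarrow> v = w"
  proof
    assume "v \<in> subb w" thus "v = w" using subb_root_h1[OF w] hv by simp
  next
    assume "v = w" thus "v \<in> subb w" using s1 w by (auto simp: subb_def V'_def)
  qed
  hence g2: "Cf w (\<lambda>y. D2 v y) = -3 + (if v = w then 4 else 0)" using gA[OF w v(1) v(3)] hv by auto
  have "Gf v w = Cf w (\<lambda>y. D2 a y) - Cf w (\<lambda>y. D2 v y)" using v by (simp add: Gf_def Cf_def)
  thus ?thesis using g1 g2 hv by auto
qed

lemma Gf_deep_root: assumes v: "v \<in> V'" "par v \<noteq> a" and w: "w < n" "w \<noteq> a" "w \<noteq> c" "par w = a"
  shows "Gf v w = 0"
proof -
  note i = V'_par_info[OF v]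
  define P where "P = par v"
  define Q where "Q = par P"
  have PV: "P \<in> V'" using i(1) by (simp add: P_def)
  have Qc: "Q \<in> V' \<or> Q = a" using par_V'[OF PV] by (simp add: Q_def)
  have vn: "v < n" "v \<noteq> c" "v \<noteq> a" "v \<noteq> b" using V'D[OF v(1)] by auto
  have Pn: "P < n" "P \<noteq> c" "P \<noteq> b" using V'D[OF PV] by auto
  have Qn: "Q < n" "Q \<noteq> c" "Q \<noteq> b" using Qc V'D tri abc by auto
  have hP: "h v = h P + 1" "h P = h Q + 1" using i by (simp_all add: P_def Q_def)
  define S where "S = subb w"
  have gv: "Cf w (\<lambda>y. D2 x y) = - (2 * real (h x) + 1) + (if x \<in> S then 4 * real (h x) else 0)"
    if "x < n" "x \<noteq> c" for x using gA[OF w that] by (simp add: S_def)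
  have GfE: "Gf v w = 2 * Cf w (\<lambda>y. D2 P y) - Cf w (\<lambda>y. D2 v y) - Cf w (\<lambda>y. D2 Q y)"
    using v vn by (simp add: Gf_def Cf_def P_def Q_def)
  have mem: "(P \<in> S \<and> v \<in> S \<and> Q \<in> S) \<or> (P \<in> S \<and> v \<in> S \<and> Q \<notin> S \<and> h P = 1) \<or> (P \<notin> S \<and> v \<notin> S \<and> Q \<notin> S)"
  proof (cases "w = b")
    case True thus ?thesis using vn Pn Qn by (simp add: S_def subb_def)
  next
    case False
    hence wV: "w \<in> V'" using w by (simp add: V'_def)
    have hw: "h w = 1" using root_h1 w by simp
    have SS: "S = sub w" using False by (simp add: S_def subb_def)
    show ?thesis
    proof (cases "P \<in> sub w")
      case True
      have vS: "v \<in> sub w" using s3[OF v(1)] True by (simp add: P_def)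
      show ?thesis
      proof (cases "P = w")
        case True
        hence "Q = a" using w by (simp add: Q_def)
        hence "Q \<notin> sub w" using sub_V' V'D by blast
        thus ?thesis using vS \<open>P \<in> sub w\<close> True hw SS by auto
      next
        case False
        have "Q \<in> sub w" using s2[OF wV \<open>P \<in> sub w\<close> False] by (simp add: Q_def)
        thus ?thesis using vS \<open>P \<in> sub w\<close> SS by auto
      qed
    next
      case False
      have Qn': "Q \<notin> sub w"
      proof
        assume "Q \<in> sub w" hence "P \<in> sub w" using s3[OF PV] by (simp add: Q_def)
        with False show False by simp
      qed
      have vn': "v \<notin> sub w"
      proof
        assume vs: "v \<in> sub w"
        have "v \<noteq> w" using hP hw h_V'[OF PV] by auto
        hence "P \<in> sub w" using s2[OF wV vs] by (simp add: P_def)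
        with False show False by simp
      qed
      show ?thesis using False Qn' vn' SS by auto
    qed
  qed
  have "Gf v w = 2 * (- (2 * real (h P) + 1) + (if P \<in> S then 4 * real (h P) else 0))
     - (- (2 * real (h v) + 1) + (if v \<in> S then 4 * real (h v) else 0))
     - (- (2 * real (h Q) + 1) + (if Q \<in> S then 4 * real (h Q) else 0))"
    unfolding GfE using gv vn Pn Qn by simp
  also have "\<dots> = 0" using mem hP by (auto simp: algebra_simps)
  finally show ?thesis .
qed

end

context U3 begin

lemma Gf_deep_deep: assumes v: "v \<in> V'" "par v \<noteq> a" and w: "w \<in> V'" "par w \<noteq> a"
  shows "Gf v w = (if v = w then -4 else 0) + (if par v = par w then 4 else 0)"
proof -
  note iv = V'_par_info[OF v]
  note iw = V'_par_info[OF w]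
  define P where "P = par v"
  define Q where "Q = par P"
  define P' where "P' = par w"
  define R where "R = sub P' - sub w"
  define t where "t x = (if x \<in> R then real (d P' x) else 0)" for x
  have PV: "P \<in> V'" using iv(1) by (simp add: P_def)
  have P'V: "P' \<in> V'" using iw(1) by (simp add: P'_def)
  have vn: "v < n" "v \<noteq> a" "v \<noteq> c" using V'D[OF v(1)] by auto
  have wn: "w < n" using V'D[OF w(1)] by auto
  have Pn: "P < n" using V'D[OF PV] by auto
  have P'n: "P' < n" using V'D[OF P'V] by auto
  have Qn: "Q < n" using par_lt Pn by (simp add: Q_def)
  have hv: "h v = h P + 1" "h P = h Q + 1" using iv by (simp_all add: P_def Q_def)
  have hw: "h w = h P' + 1" using iw by (simp add: P'_def)
  have g: "Cf w (\<lambda>y. D2 x y) = -2 - 4 * t x" if "x < n" for x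
    using gB[OF w that] by (simp add: t_def R_def P'_def)
  have GfE: "Gf v w = 2 * Cf w (\<lambda>y. D2 P y) - Cf w (\<lambda>y. D2 v y) - Cf w (\<lambda>y. D2 Q y)"
    using v vn by (simp add: Gf_def Cf_def P_def Q_def)
  hence Gt: "Gf v w = -4 * (2 * t P - t v - t Q)" using g Pn vn Qn by (simp add: algebra_simps)
  have dsym: "d x y = d y x" if "x < n" "y < n" for x y using dist_sym that by simp
  show ?thesis
  proof (cases "P \<in> R")
    case PR: True
    hence PsP': "P \<in> sub P'" and Pnw: "P \<notin> sub w" by (auto simp: R_def)
    show ?thesis
    proof (cases "P = P'")
      case True
      have tP: "t P = 0" using True P'n by (simp add: t_def dist_self)
      have vsP': "v \<in> sub P'" using s3[OF v(1)] PsP' by (simp add: P_def)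
      have vw: "v \<in> sub w \<longleftrightarrow> v = w"
      proof
        assume "v \<in> sub w" thus "v = w" using s4(2)[OF w(1)] hv hw True by simp
      qed (use s1[OF w(1)] in simp)
      have dv: "d P' v = 1" using dist_edge[OF P'n vn(1)] par(2)[OF vn(1,2)] sym P'n vn True
        by (auto simp: P_def)
      have tv: "t v = (if v = w then 0 else 1)" using vw vsP' dv by (simp add: t_def R_def)
      have "Q \<notin> sub P'" using s4(1)[OF P'V, of Q] hv True by auto
      hence tQ: "t Q = 0" by (simp add: t_def R_def)
      show ?thesis using Gt tP tv tQ True by (simp add: P_def P'_def)
    next
      case False
      have hPP': "h P' < h P" using s4[OF P'V PsP'] False by fastforce
      have QsP': "Q \<in> sub P'" using s2[OF P'V PsP' False] by (simp add: Q_def)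
      have Qnw: "Q \<notin> sub w"
      proof
        assume "Q \<in> sub w" hence "P \<in> sub w" using s3[OF PV] by (simp add: Q_def)
        with Pnw show False by simp
      qed
      have vsP': "v \<in> sub P'" using s3[OF v(1)] PsP' by (simp add: P_def)
      have vnw: "v \<noteq> w" using False by (auto simp: P_def P'_def)
      have vnsw: "v \<notin> sub w"
      proof
        assume "v \<in> sub w" hence "P \<in> sub w" using s2[OF w(1) _ vnw] by (simp add: P_def)
        with Pnw show False by simp
      qed
      have "P' \<notin> sub v" using s4(1)[OF v(1), of P'] hv hPP' by auto
      hence d1: "d v P' = d P P' + 1" using T2out[OF v(1) P'n] by (simp add: P_def)
      have "P' \<notin> sub P" using s4(1)[OF PV, of P'] hPP' by auto
      hence d2: "d P P' = d Q P' + 1" using T2out[OF PV P'n] by (simp add: Q_def)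
      have tv: "t v = real (d P' P) + 1" using vsP' vnsw d1 dsym[OF vn(1) P'n] dsym[OF Pn P'n]
        by (simp add: t_def R_def)
      have tQ: "real (d P' P) = t Q + 1" using QsP' Qnw d2 dsym[OF Qn P'n] dsym[OF Pn P'n]
        by (simp add: t_def R_def)
      have tP: "t P = real (d P' P)" using PR by (simp add: t_def)
      show ?thesis using Gt tP tv tQ vnw False by (simp add: P_def P'_def algebra_simps)
    qed
  next
    case PnR: False
    show ?thesis
    proof (cases "P \<in> sub w")
      case True
      have vsw: "v \<in> sub w" using s3[OF v(1)] True by (simp add: P_def)
      have tv: "t v = 0" using vsw by (simp add: t_def R_def)
      have tP: "t P = 0" using PnR by (simp add: t_def)
      have tQ: "t Q = 0"
      proof (cases "P = w")
        case True thus ?thesis using P'n by (simp add: t_def Q_def P'_def dist_self)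
      next
        case False
        have "Q \<in> sub w" using s2[OF w(1) \<open>P \<in> sub w\<close> False] by (simp add: Q_def)
        thus ?thesis by (simp add: t_def R_def)
      qed
      have vnw: "v \<noteq> w" using s4(1)[OF w(1) True] hv by auto
      have "P' \<notin> sub w" using s4(1)[OF w(1), of P'] hw by auto
      hence pnw: "P \<noteq> P'" using True by auto
      show ?thesis using Gt tP tv tQ vnw pnw by (simp add: P_def P'_def)
    next
      case False
      hence PnsP': "P \<notin> sub P'" using PnR by (auto simp: R_def)
      have tP: "t P = 0" using PnR by (simp add: t_def)
      have tv: "t v = 0"
      proof (cases "v \<in> sub P'")
        case True
        have "v = P'" using s2[OF P'V True] PnsP' by (auto simp: P_def)
        thus ?thesis using P'n by (simp add: t_def dist_self)
      qed (simp add: t_def R_def)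
      have tQ: "t Q = 0"
      proof -
        have "Q \<notin> sub P'" using s3[OF PV, of P'] PnsP' by (auto simp: Q_def)
        thus ?thesis by (simp add: t_def R_def)
      qed
      have pnw: "P \<noteq> P'" using PnsP' s1[OF P'V] by auto
      hence vnw: "v \<noteq> w" by (auto simp: P_def P'_def)
      show ?thesis using Gt tP tv tQ vnw pnw by (simp add: P_def P'_def)
    qed
  qed
qed

definition Gform where
  "Gform v w = (if v = a then (if w = a \<or> w = c then 0 else if par w = a then -1 else -2)
    else if w = a then (if v = c then 0 else if par v = a then -1 else -2)
    else if v = c then (if w = c then -2 else if w = b then -1 else 0)
    else if w = c then (if v = b then -1 else 0)
    else (if v = w then -4 else 0) + (if par v = par w then (if par v = a then 2 else 4) else 0))"

lemma Gf_eq: assumes v: "v < n" and w: "w < n" shows "Gf v w = Gform v w"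
proof -
  have cls: "x = a \<or> x = c \<or> (x \<noteq> a \<and> x \<noteq> c \<and> par x = a) \<or> (x \<in> V' \<and> par x \<noteq> a)" if "x < n" for x
    using that par_b by (auto simp: V'_def)
  have Vx: "x \<in> V'" if "x < n" "x \<noteq> a" "x \<noteq> c" "par x \<noteq> a" for x
    using that par_b by (auto simp: V'_def)
  have aw: "Gf a w = Gform a w" if w: "w < n" for w
    using cls[OF w] Gf_a_a Gf_a_c Gf_a_root[OF w] Gf_a_deep by (auto simp: Gform_def)
  have cw: "Gf c w = Gform c w" if w: "w < n" "w \<noteq> a" for w
  proof -
    consider "w = c" | "w = b" | "w \<in> V'" using w by (auto simp: V'_def)
    thus ?thesis using Gf_c_c Gf_c_b Gf_c_V' abc w by cases (auto simp: Gform_def V'_def)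
  qed
  have rest: "Gf v w = Gform v w" if v: "v < n" "v \<noteq> a" "v \<noteq> c" and w: "w < n" "w \<noteq> a" "w \<noteq> c" for v w
  proof (cases "par v = a")
    case pv: True
    show ?thesis
    proof (cases "par w = a")
      case True thus ?thesis using Gf_root_root[OF v pv w] pv v w by (simp add: Gform_def)
    next
      case False
      have "Gf v w = Gf w v" using Gf_sym v w by simp
      also have "\<dots> = 0" using Gf_deep_root[OF Vx[OF w False] False v pv] .
      finally show ?thesis using pv False v w by (auto simp: Gform_def)
    qed
  next
    case pv: False
    show ?thesis
    proof (cases "par w = a")
      case True
      thus ?thesis using Gf_deep_root[OF Vx[OF v pv] pv w True] pv v w by (auto simp: Gform_def)
    next
      case False
      thus ?thesis using Gf_deep_deep[OF Vx[OF v pv] pv Vx[OF w False] False] pv v w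
        by (auto simp: Gform_def)
    qed
  qed
  show ?thesis
  proof (cases "v = a")
    case True thus ?thesis using aw[OF w] by simp
  next
    case va: False
    show ?thesis
    proof (cases "w = a")
      case True
      have "Gf v w = Gf w v" using Gf_sym v w by simp
      also have "\<dots> = Gform w v" using aw[OF v] True by simp
      finally show ?thesis using True va by (simp add: Gform_def)
    next
      case wa: False
      show ?thesis
      proof (cases "v = c")
        case True thus ?thesis using cw[OF w wa] by simp
      next
        case vc: False
        show ?thesis
        proof (cases "w = c")
          case True
          have "Gf v w = Gf w v" using Gf_sym v w by simp
          also have "\<dots> = Gform w v" using cw[OF v va] True by simp
          finally show ?thesis using True va wa vc by (auto simp: Gform_def)
        next
          case False thus ?thesis using rest[OF v va vc w wa] by simp
        qed
      qed
    qed
  qed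
qed

end

context U3 begin

definition col :: "nat \<Rightarrow> nat \<Rightarrow> real" where "col v x = Cf v (\<lambda>p. if p = x then 1 else 0)"

lemma sum_ev: "p < n \<Longrightarrow> (\<Sum>x<n. (if p = x then 1 else 0) * (F x :: real)) = F p"
  using sum_delta_mult by simp

lemma Cf_pts: "v < n \<Longrightarrow> v \<noteq> a \<Longrightarrow> v \<noteq> c \<Longrightarrow> par v \<noteq> a \<Longrightarrow> par v < n \<and> par (par v) < n"
  using par_lt by auto

lemma colsum: assumes v: "v < n" shows "(\<Sum>x<n. col v x * F x) = Cf v F"
proof -
  have pa: "par v < n" "par (par v) < n" using par_lt v by auto
  consider "v = a" | "v \<noteq> a" "v = c" | "v \<noteq> a" "v \<noteq> c" "par v = a" | "v \<noteq> a" "v \<noteq> c" "par v \<noteq> a" by blast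
  then show ?thesis
  proof cases
    case 1 thus ?thesis using tri by (simp add: col_def Cf_def sum_ev)
  next
    case 2
    have "(\<Sum>x<n. col v x * F x) = (\<Sum>x<n. (if c = x then 1 else 0) * F x) - (\<Sum>x<n. (if b = x then 1 else 0) * F x)"
      using 2 by (simp add: col_def Cf_def algebra_simps sum_subtractf)
    thus ?thesis using 2 tri by (simp add: sum_ev Cf_def)
  next
    case 3
    have "(\<Sum>x<n. col v x * F x) = (\<Sum>x<n. (if a = x then 1 else 0) * F x) - (\<Sum>x<n. (if v = x then 1 else 0) * F x)"
      using 3 by (simp add: col_def Cf_def algebra_simps sum_subtractf)
    thus ?thesis using 3 tri v by (simp add: sum_ev Cf_def)
  next
    case 4
    have "(\<Sum>x<n. col v x * F x) = 2 * (\<Sum>x<n. (if par v = x then 1 else 0) * F x) - (\<Sum>x<n. (if v = x then 1 else 0) * F x)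
       - (\<Sum>x<n. (if par (par v) = x then 1 else 0) * F x)"
      using 4 by (simp add: col_def Cf_def algebra_simps sum_subtractf sum.distrib sum_distrib_left)
    thus ?thesis using 4 pa v by (simp add: sum_ev Cf_def)
  qed
qed

abbreviation DM where "DM \<equiv> dist_sq_matrix E n"

lemma DM_carrier: "DM \<in> carrier_mat n n" by (simp add: dist_sq_matrix_def)

lemma DM_ent: "x < n \<Longrightarrow> y < n \<Longrightarrow> DM $$ (x,y) = D2 x y" by (simp add: dist_sq_matrix_def D2_def)

lemma DM_sym: "\<forall>i<n. \<forall>j<n. DM $$ (i,j) = DM $$ (j,i)" using DM_ent D2_sym by simp

definition QG :: "(nat \<Rightarrow> real) \<Rightarrow> real" where
  "QG \<alpha> = (\<Sum>v<n. \<Sum>w<n. \<alpha> v * \<alpha> w * Gform v w)"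

lemma qf_B: "qf DM n (\<lambda>x. \<Sum>v<n. \<alpha> v * col v x) = QG \<alpha>"
proof -
  have "qf DM n (\<lambda>x. \<Sum>v<n. \<alpha> v * col v x) =
      (\<Sum>x<n. \<Sum>y<n. D2 x y * (\<Sum>v<n. \<alpha> v * col v x) * (\<Sum>w<n. \<alpha> w * col w y))"
    unfolding qf_def by (intro sum.cong refl) (simp add: DM_ent)
  also have "\<dots> = (\<Sum>x<n. \<Sum>y<n. \<Sum>v<n. \<Sum>w<n. \<alpha> v * \<alpha> w * (col v x * (col w y * D2 x y)))"
    by (simp add: sum_distrib_left sum_distrib_right mult_ac)
  also have "\<dots> = (\<Sum>x<n. \<Sum>v<n. \<Sum>y<n. \<Sum>w<n. \<alpha> v * \<alpha> w * (col v x * (col w y * D2 x y)))"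
    by (rule sum.cong[OF refl], rule sum.swap)
  also have "\<dots> = (\<Sum>v<n. \<Sum>x<n. \<Sum>y<n. \<Sum>w<n. \<alpha> v * \<alpha> w * (col v x * (col w y * D2 x y)))"
    by (rule sum.swap)
  also have "\<dots> = (\<Sum>v<n. \<Sum>x<n. \<Sum>w<n. \<Sum>y<n. \<alpha> v * \<alpha> w * (col v x * (col w y * D2 x y)))"
    by (rule sum.cong[OF refl], rule sum.cong[OF refl], rule sum.swap)
  also have "\<dots> = (\<Sum>v<n. \<Sum>w<n. \<Sum>x<n. \<Sum>y<n. \<alpha> v * \<alpha> w * (col v x * (col w y * D2 x y)))"
    by (rule sum.cong[OF refl], rule sum.swap)
  also have "\<dots> = (\<Sum>v<n. \<Sum>w<n. \<alpha> v * \<alpha> w * (\<Sum>x<n. col v x * (\<Sum>y<n. col w y * D2 x y)))"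
    by (simp add: sum_distrib_left)
  also have "\<dots> = (\<Sum>v<n. \<Sum>w<n. \<alpha> v * \<alpha> w * Gf v w)"
    by (intro sum.cong refl) (simp add: colsum Gf_def)
  also have "\<dots> = QG \<alpha>" unfolding QG_def by (intro sum.cong refl) (simp add: Gf_eq)
  finally show ?thesis .
qed

end

context U3 begin

definition ch where "ch x = {w \<in> V'. par w = x}"
definition sg :: "(nat \<Rightarrow> real) \<Rightarrow> nat \<Rightarrow> real" where "sg \<alpha> x = (\<Sum>w\<in>ch x. \<alpha> w)"

lemma fin_V': "finite V'" by (simp add: V'_def)
lemma fin_ch: "finite (ch x)" using fin_V' by (simp add: ch_def)

lemma split_n: "(\<Sum>w<n. f w) = f a + f b + f c + (\<Sum>w\<in>V'. (f w :: real))"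
proof -
  have "{..<n} = {a, b, c} \<union> V'" using tri by (auto simp: V'_def)
  hence "(\<Sum>w<n. f w) = sum f (insert a (insert b (insert c V')))" by simp
  moreover have "a \<notin> V'" "b \<notin> V'" "c \<notin> V'" by (auto simp: V'_def)
  ultimately show ?thesis using abc fin_V' by simp
qed

lemma group_V': "(\<Sum>w\<in>{w\<in>V'. par w \<noteq> a}. g w) = (\<Sum>x\<in>V'. \<Sum>w\<in>ch x. (g w :: real))"
proof -
  have img: "par ` {w\<in>V'. par w \<noteq> a} \<subseteq> V'" using par_V' by auto
  have "(\<Sum>w\<in>{w\<in>V'. par w \<noteq> a}. g w) = (\<Sum>x\<in>V'. \<Sum>w\<in>{w \<in> {w\<in>V'. par w \<noteq> a}. par w = x}. g w)"
    by (rule sum.group[symmetric]) (use fin_V' img in auto)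
  also have "\<dots> = (\<Sum>x\<in>V'. \<Sum>w\<in>ch x. g w)"
    by (intro sum.cong refl) (auto simp: ch_def V'_def)
  finally show ?thesis .
qed

lemma split_V': "(\<Sum>w\<in>V'. g w) = (\<Sum>w\<in>ch a. g w) + (\<Sum>w\<in>{w\<in>V'. par w \<noteq> a}. (g w :: real))"
proof -
  have "V' = ch a \<union> {w\<in>V'. par w \<noteq> a}" by (auto simp: ch_def)
  moreover have "ch a \<inter> {w\<in>V'. par w \<noteq> a} = {}" by (auto simp: ch_def)
  ultimately show ?thesis using fin_V' fin_ch by (metis (no_types, lifting) finite_Un sum.union_disjoint)
qed

definition TT :: "(nat \<Rightarrow> real) \<Rightarrow> real" where "TT \<alpha> = (\<Sum>w\<in>{w\<in>V'. par w \<noteq> a}. \<alpha> w)"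

lemma R_a: fixes \<alpha> :: "nat \<Rightarrow> real" shows "(\<Sum>w<n. Gform a w * \<alpha> w) = - \<alpha> b - sg \<alpha> a - 2 * TT \<alpha>"
proof -
  have "(\<Sum>w\<in>V'. Gform a w * \<alpha> w) = (\<Sum>w\<in>ch a. - \<alpha> w) + (\<Sum>w\<in>{w\<in>V'. par w \<noteq> a}. -2 * \<alpha> w)"
    unfolding split_V' by (intro arg_cong2[where f="(+)"] sum.cong refl) (auto simp: Gform_def ch_def V'_def)
  thus ?thesis unfolding split_n using abc par_b
    by (simp add: Gform_def sg_def TT_def sum_negf sum_distrib_left[symmetric])
qed

lemma R_c: fixes \<alpha> :: "nat \<Rightarrow> real" shows "(\<Sum>w<n. Gform c w * \<alpha> w) = - \<alpha> b - 2 * \<alpha> c"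
proof -
  have "(\<Sum>w\<in>V'. Gform c w * \<alpha> w) = 0" by (intro sum.neutral) (use abc in \<open>auto simp: Gform_def V'_def\<close>)
  thus ?thesis unfolding split_n using abc by (simp add: Gform_def)
qed

lemma R_b: fixes \<alpha> :: "nat \<Rightarrow> real" shows "(\<Sum>w<n. Gform b w * \<alpha> w) = - \<alpha> a - \<alpha> c - 2 * \<alpha> b + 2 * sg \<alpha> a"
proof -
  have "(\<Sum>w\<in>V'. Gform b w * \<alpha> w) = (\<Sum>w\<in>V'. (if par w = a then 2 * \<alpha> w else 0))"
    by (intro sum.cong refl) (use abc in \<open>auto simp: Gform_def V'_def par_b\<close>)
  also have "\<dots> = 2 * sg \<alpha> a" unfolding sg_def ch_def using fin_V'
    by (simp add: sum.If_cases sum_distrib_left Int_def)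
  finally show ?thesis unfolding split_n using abc par_b by (simp add: Gform_def)
qed

lemma R_V': fixes \<alpha> :: "nat \<Rightarrow> real" assumes v: "v \<in> V'"
  shows "(\<Sum>w<n. Gform v w * \<alpha> w) = (if par v = a then - \<alpha> a + 2 * \<alpha> b else - 2 * \<alpha> a)
     - 4 * \<alpha> v + (if par v = a then 2 else 4) * sg \<alpha> (par v)"
proof -
  have vn: "v \<noteq> a" "v \<noteq> b" "v \<noteq> c" "v < n" using V'D[OF v] by auto
  have "(\<Sum>w\<in>V'. Gform v w * \<alpha> w) = (\<Sum>w\<in>V'. (if v = w then -4 * \<alpha> w else 0))
      + (\<Sum>w\<in>V'. (if par w = par v then (if par v = a then 2 else 4) * \<alpha> w else 0))"
    by (subst sum.distrib[symmetric], intro sum.cong refl) (use vn in \<open>auto simp: Gform_def V'_def\<close>)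
  also have "(\<Sum>w\<in>V'. (if v = w then -4 * \<alpha> w else 0)) = -4 * \<alpha> v"
    using v fin_V' by (simp add: sum.delta)
  also have "(\<Sum>w\<in>V'. (if par w = par v then (if par v = a then 2 else 4) * \<alpha> w else 0))
      = (\<Sum>w\<in>{w\<in>V'. par w = par v}. (if par v = a then 2 else 4) * \<alpha> w)"
    using fin_V' by (simp add: sum.inter_filter)
  also have "\<dots> = (if par v = a then 2 else 4) * sg \<alpha> (par v)"
    unfolding sg_def ch_def by (simp add: sum_distrib_left)
  finally have "(\<Sum>w\<in>V'. Gform v w * \<alpha> w) = -4 * \<alpha> v + (if par v = a then 2 else 4) * sg \<alpha> (par v)" .
  thus ?thesis unfolding split_n using vn abc par_b by (simp add: Gform_def)
qed

definition Qc :: "(nat \<Rightarrow> real) \<Rightarrow> real" where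
  "Qc \<alpha> = -2 * \<alpha> c ^ 2 - 2 * \<alpha> c * \<alpha> b - 2 * \<alpha> a * (sg \<alpha> a + \<alpha> b) - 4 * \<alpha> a * TT \<alpha>
    - 4 * \<alpha> b ^ 2 - 4 * (\<Sum>w\<in>V'. \<alpha> w ^ 2) + 2 * (sg \<alpha> a + \<alpha> b) ^ 2 + 4 * (\<Sum>x\<in>V'. sg \<alpha> x ^ 2)"

lemma QG_Qc: fixes \<alpha> :: "nat \<Rightarrow> real" shows "QG \<alpha> = Qc \<alpha>"
proof -
  have QGr: "QG \<alpha> = (\<Sum>v<n. \<alpha> v * (\<Sum>w<n. Gform v w * \<alpha> w))"
    unfolding QG_def by (simp add: sum_distrib_left mult_ac)
  have sV: "(\<Sum>v\<in>V'. \<alpha> v * (\<Sum>w<n. Gform v w * \<alpha> w)) =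
      (\<Sum>v\<in>ch a. \<alpha> v * (- \<alpha> a + 2 * \<alpha> b - 4 * \<alpha> v + 2 * sg \<alpha> a))
      + (\<Sum>v\<in>{w\<in>V'. par w \<noteq> a}. \<alpha> v * (- 2 * \<alpha> a - 4 * \<alpha> v + 4 * sg \<alpha> (par v)))"
    unfolding split_V' by (intro arg_cong2[where f="(+)"] sum.cong refl) (auto simp: R_V' ch_def)
  have s1: "(\<Sum>v\<in>ch a. \<alpha> v * (- \<alpha> a + 2 * \<alpha> b - 4 * \<alpha> v + 2 * sg \<alpha> a)) =
      (- \<alpha> a + 2 * \<alpha> b + 2 * sg \<alpha> a) * sg \<alpha> a - 4 * (\<Sum>v\<in>ch a. \<alpha> v ^ 2)"
    unfolding sg_def by (simp add: algebra_simps sum.distrib sum_subtractf sum_distrib_left power2_eq_square)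
  have g2: "(\<Sum>v\<in>{w\<in>V'. par w \<noteq> a}. \<alpha> v * sg \<alpha> (par v)) = (\<Sum>x\<in>V'. sg \<alpha> x ^ 2)"
    unfolding group_V' by (intro sum.cong refl) (simp add: ch_def sg_def power2_eq_square sum_distrib_right)
  have s2: "(\<Sum>v\<in>{w\<in>V'. par w \<noteq> a}. \<alpha> v * (- 2 * \<alpha> a - 4 * \<alpha> v + 4 * sg \<alpha> (par v))) =
      - 2 * \<alpha> a * TT \<alpha> - 4 * (\<Sum>v\<in>{w\<in>V'. par w \<noteq> a}. \<alpha> v ^ 2) + 4 * (\<Sum>x\<in>V'. sg \<alpha> x ^ 2)"
  proof -
    let ?S = "{w\<in>V'. par w \<noteq> a}"
    have "(\<Sum>v\<in>?S. \<alpha> v * (- 2 * \<alpha> a - 4 * \<alpha> v + 4 * sg \<alpha> (par v))) =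
        (\<Sum>v\<in>?S. (-2 * \<alpha> a) * \<alpha> v) + (\<Sum>v\<in>?S. (-4) * \<alpha> v ^ 2) + (\<Sum>v\<in>?S. 4 * (\<alpha> v * sg \<alpha> (par v)))"
      by (simp add: sum.distrib[symmetric] algebra_simps power2_eq_square)
    also have "\<dots> = - 2 * \<alpha> a * TT \<alpha> - 4 * (\<Sum>v\<in>?S. \<alpha> v ^ 2) + 4 * (\<Sum>v\<in>?S. \<alpha> v * sg \<alpha> (par v))"
      unfolding TT_def by (simp add: sum_distrib_left[symmetric] sum_negf)
    finally show ?thesis unfolding g2 .
  qed
  have sq: "(\<Sum>w\<in>V'. \<alpha> w ^ 2) = (\<Sum>v\<in>ch a. \<alpha> v ^ 2) + (\<Sum>v\<in>{w\<in>V'. par w \<noteq> a}. \<alpha> v ^ 2)"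
    by (rule split_V')
  have "QG \<alpha> = \<alpha> a * (\<Sum>w<n. Gform a w * \<alpha> w) + \<alpha> b * (\<Sum>w<n. Gform b w * \<alpha> w)
      + \<alpha> c * (\<Sum>w<n. Gform c w * \<alpha> w) + (\<Sum>v\<in>V'. \<alpha> v * (\<Sum>w<n. Gform v w * \<alpha> w))"
    unfolding QGr by (rule split_n)
  also have "\<dots> = Qc \<alpha>" unfolding R_a R_b R_c sV s1 s2 Qc_def sq
    by (simp add: algebra_simps power2_eq_square)
  finally show ?thesis .
qed

end

context U3 begin

lemma col_vals:
  shows "col a x = (if x = a then 1 else 0)"
    and "col c x = (if x = c then 1 else 0) - (if x = b then 1 else 0)"
    and "v \<noteq> a \<Longrightarrow> v \<noteq> c \<Longrightarrow> par v = a \<Longrightarrow> col v x = (if x = a then 1 else 0) - (if x = v then 1 else 0)"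
    and "v \<noteq> a \<Longrightarrow> v \<noteq> c \<Longrightarrow> par v \<noteq> a \<Longrightarrow> col v x = 2 * (if x = par v then 1 else 0)
          - (if x = v then 1 else 0) - (if x = par (par v) then 1 else 0)"
  using abc by (auto simp: col_def Cf_def)

lemma col_self: "y \<in> V' \<Longrightarrow> col y y = -1"
proof -
  assume y: "y \<in> V'"
  have yn: "y \<noteq> a" "y \<noteq> c" "y < n" using V'D[OF y] by auto
  show ?thesis
  proof (cases "par y = a")
    case True thus ?thesis using col_vals(3)[OF yn(1,2) True, of y] yn by simp
  next
    case False
    have "par y \<noteq> y" using par(3)[OF yn(3) yn(1)] by auto
    moreover have "par (par y) \<noteq> y" using par(3)[OF yn(3) yn(1)] h_par[OF par_lt[OF yn(3)]] by auto
    ultimately show ?thesis using col_vals(4)[OF yn(1,2) False, of y] by simp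
  qed
qed

lemma col_zero_low: assumes v: "v < n" "v \<noteq> y" and y: "y \<in> V'" and hv: "v \<in> V' \<Longrightarrow> h v \<le> h y"
  shows "col v y = 0"
proof -
  have yn: "y \<noteq> a" "y \<noteq> b" "y \<noteq> c" "y < n" using V'D[OF y] by auto
  consider "v = a" | "v = c" | "v = b" | "v \<in> V'" using v by (auto simp: V'_def)
  then show ?thesis
  proof cases
    case 1 thus ?thesis using col_vals(1) yn by simp
  next
    case 2 thus ?thesis using col_vals(2) yn by simp
  next
    case 3 thus ?thesis using col_vals(3)[of b y] abc par_b yn by simp
  next
    case 4
    have vn: "v \<noteq> a" "v \<noteq> c" using V'D[OF 4] by auto
    show ?thesis
    proof (cases "par v = a")
      case True thus ?thesis using col_vals(3)[OF vn True, of y] yn v by simp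
    next
      case False
      have "h (par v) < h y" using par(3)[of v] V'D[OF 4] hv[OF 4] by simp
      hence "par v \<noteq> y" by auto
      moreover have "h (par (par v)) < h y" using h_par par_lt V'D[OF 4] \<open>h (par v) < h y\<close> by auto
      hence "par (par v) \<noteq> y" by auto
      ultimately show ?thesis using col_vals(4)[OF vn False, of y] v by simp
    qed
  qed
qed

lemma col_at_c: "v < n \<Longrightarrow> col v c = (if v = c then 1 else 0)"
proof -
  assume v: "v < n"
  consider "v = a" | "v = c" | "v \<noteq> a" "v \<noteq> c" "par v = a" | "v \<noteq> a" "v \<noteq> c" "par v \<noteq> a" by blast
  then show ?thesis
  proof cases
    case 4
    hence "v \<in> V'" using v par_b by (auto simp: V'_def)
    hence "par v \<in> V'" using par_V' 4 by blast
    hence "par v \<noteq> c" "par (par v) \<noteq> c" using V'D par_V' abc by blast+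
    thus ?thesis using col_vals(4)[OF 4] 4 by simp
  qed (use col_vals abc in auto)
qed

lemma col_at_b: "v < n \<Longrightarrow> col v b = (if v = c \<or> v = b then -1 else 0)"
proof -
  assume v: "v < n"
  consider "v = a" | "v = c" | "v \<noteq> a" "v \<noteq> c" "par v = a" | "v \<noteq> a" "v \<noteq> c" "par v \<noteq> a" by blast
  then show ?thesis
  proof cases
    case 4
    hence vV: "v \<in> V'" using v par_b by (auto simp: V'_def)
    hence "par v \<in> V'" using par_V' 4 by blast
    hence "par v \<noteq> b" "par (par v) \<noteq> b" using V'D par_V' abc by blast+
    thus ?thesis using col_vals(4)[OF 4] 4 V'D[OF vV] by simp
  qed (use col_vals abc par_b in auto)
qed

lemma col_at_a: assumes v: "v < n" "v \<noteq> a" "v \<noteq> b" "v \<noteq> c" shows "col v a = (if par v = a then 1 else if par (par v) = a then -1 else 0)"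
proof -
  have vV: "v \<in> V'" using v by (simp add: V'_def)
  show ?thesis
  proof (cases "par v = a")
    case True thus ?thesis using col_vals(3)[OF v(2,4) True] v by simp
  next
    case False
    hence "par v \<in> V'" using par_V'[OF vV] by simp
    hence "par v \<noteq> a" using V'D by blast
    thus ?thesis using col_vals(4)[OF v(2,4) False] v(2) by simp
  qed
qed

lemma B_inj: fixes \<alpha> :: "nat \<Rightarrow> real"
  assumes z: "\<And>x. x < n \<Longrightarrow> (\<Sum>v<n. \<alpha> v * col v x) = 0"
  shows "\<forall>v<n. \<alpha> v = 0"
proof -
  have "(\<Sum>v<n. \<alpha> v * col v c) = (\<Sum>v<n. if v = c then \<alpha> c else 0)"
    using col_at_c by (intro sum.cong refl) auto
  also have "\<dots> = \<alpha> c" using tri by simp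
  finally have "(\<Sum>v<n. \<alpha> v * col v c) = \<alpha> c" .
  hence ac: "\<alpha> c = 0" using z[of c] tri by simp
  have "(\<Sum>v<n. \<alpha> v * col v b) = (\<Sum>v<n. (if v = c then - \<alpha> c else 0) + (if v = b then - \<alpha> b else 0))"
    using col_at_b abc by (intro sum.cong refl) auto
  also have "\<dots> = - \<alpha> c - \<alpha> b" using tri by (simp add: sum.distrib)
  finally have ab: "\<alpha> b = 0" using z[of b] tri ac by simp
  have aV: "\<forall>y\<in>V'. \<alpha> y = 0"
  proof (rule ccontr)
    assume "\<not> (\<forall>y\<in>V'. \<alpha> y = 0)"
    hence ne: "{y\<in>V'. \<alpha> y \<noteq> 0} \<noteq> {}" by auto
    have fin: "finite {y\<in>V'. \<alpha> y \<noteq> 0}" using fin_V' by simp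
    define m where "m = Max (h ` {y\<in>V'. \<alpha> y \<noteq> 0})"
    have "m \<in> h ` {y\<in>V'. \<alpha> y \<noteq> 0}" unfolding m_def by (rule Max_in) (use fin ne in auto)
    then obtain y where y: "y \<in> V'" "\<alpha> y \<noteq> 0" "h y = m" by auto
    have mx: "\<And>z. z \<in> V' \<Longrightarrow> \<alpha> z \<noteq> 0 \<Longrightarrow> h z \<le> h y" using fin y(3) unfolding m_def by auto
    have yn: "y < n" using V'D[OF y(1)] by simp
    have "(\<Sum>v<n. \<alpha> v * col v y) = (\<Sum>v<n. if v = y then - \<alpha> y else 0)"
    proof (intro sum.cong refl)
      fix v assume "v \<in> {..<n}"
      hence v: "v < n" by simp
      show "\<alpha> v * col v y = (if v = y then - \<alpha> y else 0)"
      proof (cases "v = y")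
        case True thus ?thesis using col_self[OF y(1)] by simp
      next
        case False
        show ?thesis
        proof (cases "\<alpha> v = 0")
          case False
          have "col v y = 0" by (rule col_zero_low[OF v \<open>v \<noteq> y\<close> y(1)]) (use mx False in auto)
          thus ?thesis using \<open>v \<noteq> y\<close> by simp
        qed (use \<open>v \<noteq> y\<close> in simp)
      qed
    qed
    also have "\<dots> = - \<alpha> y" using yn by simp
    finally show False using z[OF yn] y(2) by simp
  qed
  have "(\<Sum>v<n. \<alpha> v * col v a) = (\<Sum>v<n. if v = a then \<alpha> a else 0)"
  proof (intro sum.cong refl)
    fix v assume "v \<in> {..<n}"
    thus "\<alpha> v * col v a = (if v = a then \<alpha> a else 0)"
      using ac ab aV col_vals(1) by (cases "v = a \<or> v = b \<or> v = c") (auto simp: V'_def)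
  qed
  also have "\<dots> = \<alpha> a" using tri by simp
  finally have aa: "\<alpha> a = 0" using z[of a] tri by simp
  show ?thesis using aa ab ac aV by (auto simp: V'_def)
qed

end

context U3 begin

lemma card_n: "n = card V' + 3"
proof -
  have "{..<n} = insert a (insert b (insert c V'))" using tri by (auto simp: V'_def)
  moreover have "a \<notin> V'" "b \<notin> V'" "c \<notin> V'" by (auto simp: V'_def)
  ultimately have "card {..<n} = card V' + 3" using abc fin_V' by simp
  thus ?thesis by simp
qed

lemma nbrs_V': assumes v: "v \<in> V'" shows "{w. w < n \<and> E v w} = insert (par v) (ch v)" "par v \<notin> ch v"
proof -
  have vn: "v < n" "v \<noteq> a" using V'D[OF v] by auto
  show "{w. w < n \<and> E v w} = insert (par v) (ch v)"
  proof
    show "{w. w < n \<and> E v w} \<subseteq> insert (par v) (ch v)" using nb_V'[OF v] by (auto simp: ch_def)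
    show "insert (par v) (ch v) \<subseteq> {w. w < n \<and> E v w}"
    proof
      fix w assume "w \<in> insert (par v) (ch v)"
      then consider "w = par v" | "w \<in> V'" "par w = v" by (auto simp: ch_def)
      thus "w \<in> {w. w < n \<and> E v w}"
      proof cases
        case 1 thus ?thesis using par[OF vn] by auto
      next
        case 2
        have wn: "w < n" "w \<noteq> a" using V'D[OF 2(1)] by auto
        have "E w v" using par(2)[OF wn] 2 by simp
        thus ?thesis using sym wn vn by auto
      qed
    qed
  qed
  show "par v \<notin> ch v"
  proof
    assume "par v \<in> ch v"
    hence "par (par v) = v" "par v \<in> V'" by (auto simp: ch_def)
    thus False using par(3)[OF vn] par(3)[of "par v"] V'D by fastforce
  qed
qed

lemma degree_V': "v \<in> V' \<Longrightarrow> degree E n v = Suc (card (ch v))"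
  unfolding degree_def using nbrs_V' fin_ch by simp

lemma leaves_eq: "leaves E n = {v \<in> V'. ch v = {}}"
proof -
  have da: "degree E n a \<ge> 2"
  proof -
    have "{b, c} \<subseteq> {w. w < n \<and> E a w}" using edges tri by auto
    hence "card {b, c} \<le> degree E n a" unfolding degree_def by (intro card_mono) auto
    thus ?thesis using abc by simp
  qed
  show ?thesis
  proof
    show "leaves E n \<subseteq> {v \<in> V'. ch v = {}}"
    proof
      fix v assume "v \<in> leaves E n"
      hence v: "v < n" "degree E n v = 1" by (auto simp: leaves_def)
      have "v \<noteq> a" "v \<noteq> b" "v \<noteq> c" using v da deg_b deg_c by auto
      hence "v \<in> V'" using v by (simp add: V'_def)
      thus "v \<in> {v \<in> V'. ch v = {}}" using degree_V' v fin_ch by auto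
    qed
    show "{v \<in> V'. ch v = {}} \<subseteq> leaves E n"
      using degree_V' V'D by (auto simp: leaves_def)
  qed
qed

definition mch where "mch x = Min (ch x)"
definition DS where "DS = {y \<in> V'. y = mch (par y)}"
definition PSa where "PSa = {x. (x \<in> V' \<or> x = a) \<and> ch x \<noteq> {}}"

lemma mch_in: "ch x \<noteq> {} \<Longrightarrow> mch x \<in> ch x" unfolding mch_def using fin_ch by (rule Min_in)

lemma ch_sub: "ch x \<subseteq> V'" by (auto simp: ch_def)

lemma card_DS: "card DS = card PSa"
proof -
  have "bij_betw mch PSa DS"
  proof (rule bij_betwI[where g = par])
    show "mch \<in> PSa \<rightarrow> DS"
    proof
      fix x assume "x \<in> PSa"
      hence m: "mch x \<in> ch x" using mch_in by (auto simp: PSa_def)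
      hence "par (mch x) = x" "mch x \<in> V'" by (auto simp: ch_def)
      thus "mch x \<in> DS" by (simp add: DS_def)
    qed
    show "par \<in> DS \<rightarrow> PSa"
    proof
      fix y assume y: "y \<in> DS"
      hence yV: "y \<in> V'" by (simp add: DS_def)
      have "y \<in> ch (par y)" using yV by (simp add: ch_def)
      thus "par y \<in> PSa" using par_V'[OF yV] by (auto simp: PSa_def)
    qed
    show "par (mch x) = x" if "x \<in> PSa" for x
      using mch_in[of x] that by (auto simp: PSa_def ch_def)
    show "mch (par y) = y" if "y \<in> DS" for y using that by (simp add: DS_def)
  qed
  thus ?thesis by (metis bij_betw_same_card)
qed

lemma leaf_ex: assumes ne: "V' \<noteq> {}" shows "{v \<in> V'. ch v = {}} \<noteq> {}"
proof -
  define m where "m = Max (h ` V')"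
  have "m \<in> h ` V'" unfolding m_def by (rule Max_in) (use fin_V' ne in auto)
  then obtain y where y: "y \<in> V'" "h y = m" by auto
  have "ch y = {}"
  proof (rule ccontr)
    assume "ch y \<noteq> {}"
    then obtain w where w: "w \<in> V'" "par w = y" by (auto simp: ch_def)
    have "h w \<le> m" unfolding m_def using fin_V' w by simp
    moreover have "h y + 1 = h w" using par(3)[of w] V'D[OF w(1)] w by simp
    ultimately show False using y by simp
  qed
  thus ?thesis using y by auto
qed

lemma card_PSa: "card PSa = card {v \<in> V'. ch v \<noteq> {}} + (if ch a \<noteq> {} then 1 else 0)"
proof -
  have eq: "PSa = {v \<in> V'. ch v \<noteq> {}} \<union> (if ch a \<noteq> {} then {a} else {})" by (auto simp: PSa_def)
  have "a \<notin> {v \<in> V'. ch v \<noteq> {}}" by (auto simp: V'_def)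
  thus ?thesis unfolding eq using fin_V' by (auto simp: card_Un_disjoint)
qed

lemma card_V'_split: "card V' = card {v \<in> V'. ch v = {}} + card {v \<in> V'. ch v \<noteq> {}}"
proof -
  have "V' = {v \<in> V'. ch v = {}} \<union> {v \<in> V'. ch v \<noteq> {}}" by auto
  moreover have "{v \<in> V'. ch v = {}} \<inter> {v \<in> V'. ch v \<noteq> {}} = {}" by auto
  ultimately show ?thesis using fin_V' by (metis (no_types, lifting) card_Un_disjoint finite_Un)
qed

lemma cha_empty: assumes "ch a = {}" shows "V' = {}"
proof (rule ccontr)
  assume ne: "V' \<noteq> {}"
  define m where "m = Min (h ` V')"
  have "m \<in> h ` V'" unfolding m_def by (rule Min_in) (use fin_V' ne in auto)
  then obtain y where y: "y \<in> V'" "h y = m" by auto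
  have "par y \<noteq> a" using assms y(1) by (auto simp: ch_def)
  hence "par y \<in> V'" using par_V'[OF y(1)] by simp
  hence "m \<le> h (par y)" unfolding m_def using fin_V' by simp
  moreover have "h (par y) + 1 = h y" using par(3)[of y] V'D[OF y(1)] by simp
  ultimately show False using y(2) by simp
qed

lemma DS_sub: "DS \<subseteq> V'" by (auto simp: DS_def)

lemma counting: assumes "ch a \<noteq> {}"
  shows "card ({a, b, c} \<union> (V' - DS)) = card (leaves E n) + 2"
    "card ({a, b, c} \<union> (V' - DS)) + card DS = n"
proof -
  have fDS: "finite DS" using fin_V' DS_sub finite_subset by blast
  have cVD: "card (V' - DS) = card V' - card DS" using card_Diff_subset[OF fDS DS_sub] .
  have cDS: "card DS \<le> card V'" using card_mono[OF fin_V' DS_sub] .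
  have "{a, b, c} \<inter> (V' - DS) = {}" by (auto simp: V'_def)
  hence cN: "card ({a, b, c} \<union> (V' - DS)) = 3 + (card V' - card DS)"
    using abc fin_V' cVD by (simp add: card_Un_disjoint)
  have cD: "card DS = card {v \<in> V'. ch v \<noteq> {}} + 1" using card_DS card_PSa assms by simp
  have "V' \<noteq> {}" using assms ch_sub by blast
  hence l1: "card {v \<in> V'. ch v = {}} \<ge> 1" using leaf_ex fin_V' by (simp add: Suc_leI card_gt_0_iff)
  show "card ({a, b, c} \<union> (V' - DS)) = card (leaves E n) + 2"
    unfolding cN leaves_eq using card_V'_split cD l1 by simp
  show "card ({a, b, c} \<union> (V' - DS)) + card DS = n" unfolding cN using card_n cDS by simp
qed

end

context U3 begin

definition ev :: "nat \<Rightarrow> nat \<Rightarrow> real" where "ev p v = (if v = p then 1 else 0)"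
definition indf :: "nat set \<Rightarrow> nat \<Rightarrow> real" where "indf S v = (if v \<in> S then 1 else 0)"
definition ND where "ND = V' - DS"
definition NS where "NS = {a, b, c} \<union> ND"
definition kk where "kk = card (ch a)"

definition nvG :: "nat \<Rightarrow> nat \<Rightarrow> real" where
  "nvG i = (if i = a then (\<lambda>v. 2 * real kk * ev a v + indf (ch a) v) else if i = b then ev b
     else if i = c then ev c else (\<lambda>v. ev i v - ev (mch (par i)) v))"

lemma nvG_a: "nvG a = (\<lambda>v. 2 * real kk * ev a v + indf (ch a) v)" by (simp add: nvG_def)
lemma nvG_b: "nvG b = ev b" using abc by (simp add: nvG_def)
lemma nvG_c: "nvG c = ev c" using abc by (simp add: nvG_def)
lemma nvG_V': "i \<in> V' \<Longrightarrow> nvG i = (\<lambda>v. ev i v - ev (mch (par i)) v)" using V'D[of i] by (simp add: nvG_def)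

lemma transfer:
  "qf DM n (\<lambda>x. \<Sum>i\<in>I. \<beta> i * (\<Sum>v<n. A i v * col v x)) = Qc (\<lambda>v. \<Sum>i\<in>I. \<beta> i * A i v)"
proof -
  have "(\<lambda>x. \<Sum>i\<in>I. \<beta> i * (\<Sum>v<n. A i v * col v x)) = (\<lambda>x. \<Sum>v<n. (\<Sum>i\<in>I. \<beta> i * A i v) * col v x)"
    by (rule ext) (simp add: sum_distrib_left sum_distrib_right mult_ac sum.swap[of _ I])
  thus ?thesis using qf_B QG_Qc by simp
qed

lemma fin_ND: "finite ND" using fin_V' by (simp add: ND_def)
lemma ND_V': "i \<in> ND \<Longrightarrow> i \<in> V'" by (simp add: ND_def)

lemma sum_NS: "(\<Sum>i\<in>NS. f i) = f a + f b + f c + (\<Sum>i\<in>ND. (f i :: real))"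
proof -
  have "a \<notin> ND" "b \<notin> ND" "c \<notin> ND" using ND_V' V'D by blast+
  thus ?thesis using abc fin_ND by (simp add: NS_def)
qed

lemma mch_par_V': "i \<in> V' \<Longrightarrow> mch (par i) \<in> V' \<and> par (mch (par i)) = par i"
proof -
  assume i: "i \<in> V'"
  have "i \<in> ch (par i)" using i by (simp add: ch_def)
  hence "mch (par i) \<in> ch (par i)" using mch_in by blast
  thus ?thesis by (simp add: ch_def)
qed

lemma mch_par_ND: assumes i: "i \<in> V'" and y: "y \<in> ND" shows "mch (par i) \<noteq> y"
proof
  assume m: "mch (par i) = y"
  hence "par y = par i" using mch_par_V'[OF i] by simp
  hence "y = mch (par y)" using m by simp
  thus False using y ND_V'[OF y] by (simp add: ND_def DS_def)
qed

lemma nvG_abc: assumes i: "i \<in> ND" and v: "v = a \<or> v = b \<or> v = c" shows "nvG i v = 0"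
proof -
  have iV: "i \<in> V'" using ND_V'[OF i] .
  have "i \<noteq> a" "i \<noteq> b" "i \<noteq> c" using V'D[OF iV] by auto
  moreover have "mch (par i) \<in> V'" using mch_par_V'[OF iV] by simp
  ultimately show ?thesis using v V'D[OF iV] V'D[of "mch (par i)"] by (auto simp: nvG_def ev_def)
qed

lemma ch_a_not: "v = a \<or> v = b \<or> v = c \<Longrightarrow> v \<notin> ch a" using ch_sub V'D by blast

lemma nv_alpha:
  fixes \<beta> :: "nat \<Rightarrow> real"
  defines "\<alpha> \<equiv> (\<lambda>v. \<Sum>i\<in>NS. \<beta> i * nvG i v)"
  shows "\<alpha> a = 2 * real kk * \<beta> a" "\<alpha> b = \<beta> b" "\<alpha> c = \<beta> c"
    "\<And>y. y \<in> ND \<Longrightarrow> \<alpha> y = (if par y = a then \<beta> a else 0) + \<beta> y"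
proof -
  have z: "(\<Sum>i\<in>ND. \<beta> i * nvG i v) = 0" if "v = a \<or> v = b \<or> v = c" for v
    using nvG_abc that by simp
  show "\<alpha> a = 2 * real kk * \<beta> a" unfolding \<alpha>_def sum_NS using z[of a] abc ch_a_not[of a]
    by (simp add: nvG_a nvG_b nvG_c ev_def indf_def)
  show "\<alpha> b = \<beta> b" unfolding \<alpha>_def sum_NS using z[of b] abc ch_a_not[of b]
    by (simp add: nvG_a nvG_b nvG_c ev_def indf_def)
  show "\<alpha> c = \<beta> c" unfolding \<alpha>_def sum_NS using z[of c] abc ch_a_not[of c]
    by (simp add: nvG_a nvG_b nvG_c ev_def indf_def)
  fix y assume y: "y \<in> ND"
  have yV: "y \<in> V'" using ND_V'[OF y] .
  have yn: "y \<noteq> a" "y \<noteq> b" "y \<noteq> c" using V'D[OF yV] by auto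
  have "(\<Sum>i\<in>ND. \<beta> i * nvG i y) = (\<Sum>i\<in>ND. if i = y then \<beta> i else 0)"
  proof (intro sum.cong refl)
    fix i assume i: "i \<in> ND"
    have "i \<noteq> a" "i \<noteq> b" "i \<noteq> c" using V'D[OF ND_V'[OF i]] by auto
    thus "\<beta> i * nvG i y = (if i = y then \<beta> i else 0)"
      using mch_par_ND[OF ND_V'[OF i] y] by (auto simp: nvG_V'[OF ND_V'[OF i]] ev_def)
  qed
  also have "\<dots> = \<beta> y" using y fin_ND by simp
  finally have s: "(\<Sum>i\<in>ND. \<beta> i * nvG i y) = \<beta> y" .
  have "y \<in> ch a \<longleftrightarrow> par y = a" using yV by (simp add: ch_def)
  thus "\<alpha> y = (if par y = a then \<beta> a else 0) + \<beta> y"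
    unfolding \<alpha>_def sum_NS s using yn by (simp add: nvG_a nvG_b nvG_c ev_def indf_def)
qed

lemma nv_sg:
  fixes \<beta> :: "nat \<Rightarrow> real"
  defines "\<alpha> \<equiv> (\<lambda>v. \<Sum>i\<in>NS. \<beta> i * nvG i v)"
  assumes x: "x \<in> V' \<or> x = a"
  shows "sg \<alpha> x = (if x = a then real kk * \<beta> a else 0)"
proof -
  have sw: "sg \<alpha> x = (\<Sum>i\<in>NS. \<beta> i * (\<Sum>w\<in>ch x. nvG i w))"
    unfolding sg_def \<alpha>_def by (simp add: sum_distrib_left sum.swap[of _ "ch x"])
  have nd: "(\<Sum>w\<in>ch x. nvG i w) = 0" if i: "i \<in> ND" for i
  proof -
    have iV: "i \<in> V'" using ND_V'[OF i] .
    have "i \<noteq> a" "i \<noteq> b" "i \<noteq> c" using V'D[OF iV] by auto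
    hence "(\<Sum>w\<in>ch x. nvG i w) = (\<Sum>w\<in>ch x. ev i w) - (\<Sum>w\<in>ch x. ev (mch (par i)) w)"
      by (simp add: nvG_V'[OF iV] sum_subtractf)
    also have "(\<Sum>w\<in>ch x. ev i w) = (if i \<in> ch x then 1 else 0)" using fin_ch
      by (simp add: ev_def sum.delta')
    also have "(\<Sum>w\<in>ch x. ev (mch (par i)) w) = (if mch (par i) \<in> ch x then 1 else 0)" using fin_ch
      by (simp add: ev_def sum.delta')
    also have "(mch (par i) \<in> ch x) = (i \<in> ch x)" using mch_par_V'[OF iV] iV by (simp add: ch_def)
    finally show ?thesis by simp
  qed
  have "(\<Sum>w\<in>ch x. nvG b w) = 0" "(\<Sum>w\<in>ch x. nvG c w) = 0"
    by (auto simp: nvG_b nvG_c ev_def ch_def V'_def intro!: sum.neutral)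
  moreover have "(\<Sum>w\<in>ch x. nvG a w) = (if x = a then real kk else 0)"
  proof -
    have "(\<Sum>w\<in>ch x. nvG a w) = (\<Sum>w\<in>ch x. indf (ch a) w)"
      by (intro sum.cong refl) (auto simp: nvG_a ev_def ch_def V'_def)
    also have "\<dots> = (if x = a then real kk else 0)"
    proof (cases "x = a")
      case True thus ?thesis by (simp add: indf_def kk_def)
    next
      case False
      have "ch x \<inter> ch a = {}" using False by (auto simp: ch_def)
      hence "(\<Sum>w\<in>ch x. indf (ch a) w) = 0" by (intro sum.neutral) (auto simp: indf_def)
      thus ?thesis using False by simp
    qed
    finally show ?thesis .
  qed
  ultimately show ?thesis unfolding sw sum_NS using nd by simp
qed

lemma nv_neg:
  fixes \<beta> :: "nat \<Rightarrow> real"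
  assumes cha: "ch a \<noteq> {}" and nz: "\<exists>i\<in>NS. \<beta> i \<noteq> 0"
  shows "Qc (\<lambda>v. \<Sum>i\<in>NS. \<beta> i * nvG i v) < 0"
proof -
  define \<alpha> where "\<alpha> = (\<lambda>v. \<Sum>i\<in>NS. \<beta> i * nvG i v)"
  have al: "\<alpha> a = 2 * real kk * \<beta> a" "\<alpha> b = \<beta> b" "\<alpha> c = \<beta> c"
    "\<And>y. y \<in> ND \<Longrightarrow> \<alpha> y = (if par y = a then \<beta> a else 0) + \<beta> y"
    unfolding \<alpha>_def using nv_alpha[where \<beta> = \<beta>] by auto
  have sga: "sg \<alpha> a = real kk * \<beta> a" using nv_sg[where \<beta> = \<beta> and x = a] unfolding \<alpha>_def by simp
  have sgx: "sg \<alpha> x = 0" if "x \<in> V'" for x using nv_sg[where \<beta> = \<beta> and x = x] that V'D unfolding \<alpha>_def by auto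
  have TT0: "TT \<alpha> = 0" unfolding TT_def group_V' using sgx by (simp add: sg_def)
  have k1: "real kk \<ge> 1" using cha fin_ch by (simp add: kk_def Suc_leI card_gt_0_iff)
  have Q: "Qc \<alpha> = -2 * (\<beta> c ^ 2 + \<beta> b * \<beta> c + \<beta> b ^ 2) - 2 * real kk ^ 2 * \<beta> a ^ 2
     - 4 * (\<Sum>w\<in>V'. \<alpha> w ^ 2)"
    unfolding Qc_def using sgx by (simp add: al(1) al(2) al(3) sga TT0 power2_eq_square algebra_simps)
  have s0: "(\<Sum>w\<in>V'. \<alpha> w ^ 2) \<ge> 0" by (intro sum_nonneg) auto
  have q4: "4 * (\<beta> c ^ 2 + \<beta> b * \<beta> c + \<beta> b ^ 2) = (2 * \<beta> c + \<beta> b) ^ 2 + 3 * \<beta> b ^ 2"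
    by (simp add: power2_eq_square algebra_simps)
  have "(2 * \<beta> c + \<beta> b) ^ 2 + 3 * \<beta> b ^ 2 \<ge> 0" by simp
  hence q0: "\<beta> c ^ 2 + \<beta> b * \<beta> c + \<beta> b ^ 2 \<ge> 0" unfolding q4[symmetric] by (simp add: zero_le_mult_iff)
  define q where "q = \<beta> c ^ 2 + \<beta> b * \<beta> c + \<beta> b ^ 2"
  define S where "S = (\<Sum>w\<in>V'. \<alpha> w ^ 2)"
  define K where "K = real kk ^ 2 * \<beta> a ^ 2"
  have QQ: "Qc \<alpha> = -2 * q - 2 * K - 4 * S" unfolding Q q_def S_def K_def by simp
  have q0': "q \<ge> 0" using q0 by (simp add: q_def)
  have S0: "S \<ge> 0" using s0 by (simp add: S_def)
  have K0: "K \<ge> 0" by (simp add: K_def)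
  consider "\<beta> b \<noteq> 0 \<or> \<beta> c \<noteq> 0" | "\<beta> b = 0" "\<beta> c = 0" "\<beta> a \<noteq> 0" | "\<beta> a = 0" "\<beta> b = 0" "\<beta> c = 0"
    by blast
  hence "Qc \<alpha> < 0"
  proof cases
    case 1
    have "4 * q = (2 * \<beta> c + \<beta> b) ^ 2 + 3 * \<beta> b ^ 2" unfolding q_def
      by (simp add: power2_eq_square algebra_simps)
    moreover have "(2 * \<beta> c + \<beta> b) ^ 2 + 3 * \<beta> b ^ 2 > 0" using 1
      by (cases "\<beta> b = 0") (auto simp: add_pos_nonneg add_nonneg_pos)
    ultimately have "q > 0" by simp
    thus ?thesis using QQ S0 K0 by linarith
  next
    case 2
    have "K > 0" using 2 k1 by (simp add: K_def)
    thus ?thesis using QQ S0 q0' by linarith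
  next
    case 3
    then obtain y where y: "y \<in> ND" "\<beta> y \<noteq> 0" using nz unfolding NS_def by auto
    have ay: "\<alpha> y = \<beta> y" using al(4)[OF y(1)] 3 by simp
    have "S > 0" unfolding S_def
    proof (rule sum_pos2[OF fin_V'])
      show "y \<in> V'" using ND_V'[OF y(1)] .
      show "0 < \<alpha> y ^ 2" using ay y by simp
    qed auto
    thus ?thesis using QQ q0' K0 by linarith
  qed
  thus ?thesis unfolding \<alpha>_def .
qed

end

context U3 begin

definition wvG :: "nat \<Rightarrow> nat \<Rightarrow> real" where
  "wvG y = (if par y = a then (\<lambda>v. 4 * ev b v - 2 * ev c v + 3 * indf (ch a) v) else indf (ch (par y)))"

lemma m0_DS: assumes "ch a \<noteq> {}" shows "mch a \<in> DS" "par (mch a) = a" "mch a \<in> V'"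
proof -
  have m: "mch a \<in> ch a" using mch_in[OF assms] .
  thus "par (mch a) = a" "mch a \<in> V'" by (auto simp: ch_def)
  thus "mch a \<in> DS" by (simp add: DS_def)
qed

lemma DS_root: "y \<in> DS \<Longrightarrow> par y = a \<Longrightarrow> y = mch a" by (simp add: DS_def)

lemma wv_alpha:
  fixes \<gamma> :: "nat \<Rightarrow> real"
  assumes cha: "ch a \<noteq> {}"
  defines "\<alpha> \<equiv> (\<lambda>v. \<Sum>y\<in>DS. \<gamma> y * wvG y v)"
  shows "\<alpha> a = 0" "\<alpha> b = 4 * \<gamma> (mch a)" "\<alpha> c = -2 * \<gamma> (mch a)"
    "\<And>w. w \<in> V' \<Longrightarrow> \<alpha> w = (if par w = a then 3 * \<gamma> (mch a) else \<gamma> (mch (par w)))"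
proof -
  note m0 = m0_DS[OF cha]
  define DS' where "DS' = {y \<in> DS. par y \<noteq> a}"
  have DSs: "DS = insert (mch a) DS'"
  proof
    show "DS \<subseteq> insert (mch a) DS'"
    proof
      fix y assume y: "y \<in> DS"
      show "y \<in> insert (mch a) DS'"
      proof (cases "par y = a")
        case True thus ?thesis using DS_root[OF y True] by simp
      next
        case False thus ?thesis using y by (simp add: DS'_def)
      qed
    qed
    show "insert (mch a) DS' \<subseteq> DS" using m0(1) by (auto simp: DS'_def)
  qed
  have nin: "mch a \<notin> DS'" using m0 by (simp add: DS'_def)
  have fDS': "finite DS'" using fin_V' DS_sub by (auto simp: DS'_def intro: finite_subset)
  have split: "\<alpha> v = \<gamma> (mch a) * wvG (mch a) v + (\<Sum>y\<in>DS'. \<gamma> y * indf (ch (par y)) v)" for v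
  proof -
    have "\<alpha> v = \<gamma> (mch a) * wvG (mch a) v + (\<Sum>y\<in>DS'. \<gamma> y * wvG y v)"
      unfolding \<alpha>_def DSs using nin fDS' by simp
    also have "(\<Sum>y\<in>DS'. \<gamma> y * wvG y v) = (\<Sum>y\<in>DS'. \<gamma> y * indf (ch (par y)) v)"
      by (intro sum.cong refl) (auto simp: wvG_def DS'_def)
    finally show ?thesis .
  qed
  have w0: "wvG (mch a) = (\<lambda>v. 4 * ev b v - 2 * ev c v + 3 * indf (ch a) v)" using m0 by (simp add: wvG_def)
  have z: "(\<Sum>y\<in>DS'. \<gamma> y * indf (ch (par y)) v) = 0" if "v \<notin> V'" for v
    using that ch_sub by (intro sum.neutral) (auto simp: indf_def)
  have nV: "a \<notin> V'" "b \<notin> V'" "c \<notin> V'" by (auto simp: V'_def)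
  have na: "a \<notin> ch a" "b \<notin> ch a" "c \<notin> ch a" using ch_a_not by auto
  have "wvG (mch a) a = 0" unfolding w0 using abc na by (simp add: ev_def indf_def)
  thus "\<alpha> a = 0" using split[of a] z[OF nV(1)] by simp
  have "wvG (mch a) b = 4" unfolding w0 using abc na by (simp add: ev_def indf_def)
  thus "\<alpha> b = 4 * \<gamma> (mch a)" using split[of b] z[OF nV(2)] by simp
  have "wvG (mch a) c = -2" unfolding w0 using abc na by (simp add: ev_def indf_def)
  thus "\<alpha> c = -2 * \<gamma> (mch a)" using split[of c] z[OF nV(3)] by simp
  fix w assume w: "w \<in> V'"
  have wn: "w \<noteq> b" "w \<noteq> c" using V'D[OF w] by auto
  have "(\<Sum>y\<in>DS'. \<gamma> y * indf (ch (par y)) w) = (\<Sum>y\<in>DS'. if y = mch (par w) then \<gamma> y else 0)"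
  proof (intro sum.cong refl)
    fix y assume y: "y \<in> DS'"
    hence yD: "y \<in> DS" "par y \<noteq> a" "y \<in> V'" by (auto simp: DS'_def DS_def)
    have "w \<in> ch (par y) \<longleftrightarrow> y = mch (par w)"
    proof
      assume "w \<in> ch (par y)"
      hence "par w = par y" by (simp add: ch_def)
      thus "y = mch (par w)" using yD(1) by (simp add: DS_def)
    next
      assume "y = mch (par w)"
      hence "par y = par w" using mch_par_V'[OF w] by simp
      thus "w \<in> ch (par y)" using w by (simp add: ch_def)
    qed
    thus "\<gamma> y * indf (ch (par y)) w = (if y = mch (par w) then \<gamma> y else 0)" by (simp add: indf_def)
  qed
  also have "\<dots> = (if par w = a then 0 else \<gamma> (mch (par w)))"
  proof (cases "par w = a")
    case True
    have "mch (par w) \<notin> DS'" using True m0 by (simp add: DS'_def)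
    thus ?thesis using True fDS' by (simp add: sum.delta')
  next
    case False
    have "mch (par w) \<in> DS'" using mch_par_V'[OF w] False by (simp add: DS'_def DS_def)
    thus ?thesis using False fDS' by (simp add: sum.delta')
  qed
  finally have s: "(\<Sum>y\<in>DS'. \<gamma> y * indf (ch (par y)) w) = (if par w = a then 0 else \<gamma> (mch (par w)))" .
  have "wvG (mch a) w = (if par w = a then 3 else 0)" unfolding w0 using wn w
    by (simp add: ev_def indf_def ch_def)
  thus "\<alpha> w = (if par w = a then 3 * \<gamma> (mch a) else \<gamma> (mch (par w)))"
    using split[of w] s by simp
qed

lemma wv_psd:
  fixes \<gamma> :: "nat \<Rightarrow> real"
  assumes cha: "ch a \<noteq> {}"
  shows "Qc (\<lambda>v. \<Sum>y\<in>DS. \<gamma> y * wvG y v) \<ge> 0"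
proof -
  define \<alpha> where "\<alpha> = (\<lambda>v. \<Sum>y\<in>DS. \<gamma> y * wvG y v)"
  have al: "\<alpha> a = 0" "\<alpha> b = 4 * \<gamma> (mch a)" "\<alpha> c = -2 * \<gamma> (mch a)"
    "\<And>w. w \<in> V' \<Longrightarrow> \<alpha> w = (if par w = a then 3 * \<gamma> (mch a) else \<gamma> (mch (par w)))"
    unfolding \<alpha>_def using wv_alpha[OF cha, where \<gamma> = \<gamma>] by auto
  define g0 where "g0 = \<gamma> (mch a)"
  define k where "k = real kk"
  have k1: "k \<ge> 1" using cha fin_ch by (simp add: k_def kk_def Suc_leI card_gt_0_iff)
  have sga: "sg \<alpha> a = 3 * k * g0" unfolding sg_def
    using al(4) by (simp add: ch_def g0_def k_def kk_def)
  have sgx: "sg \<alpha> x = real (card (ch x)) * \<gamma> (mch x)" if x: "x \<in> V'" for x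
  proof -
    have "x \<noteq> a" using V'D[OF x] by simp
    hence "sg \<alpha> x = (\<Sum>w\<in>ch x. \<gamma> (mch x))" unfolding sg_def
      by (intro sum.cong refl) (auto simp: al(4) ch_def)
    thus ?thesis by simp
  qed
  have sq: "(\<Sum>w\<in>V'. \<alpha> w ^ 2) = 9 * k * g0 ^ 2 + (\<Sum>x\<in>V'. real (card (ch x)) * \<gamma> (mch x) ^ 2)"
  proof -
    have "(\<Sum>w\<in>ch a. \<alpha> w ^ 2) = 9 * k * g0 ^ 2"
      using al(4) by (simp add: ch_def g0_def k_def kk_def power2_eq_square)
    moreover have "(\<Sum>w\<in>{w\<in>V'. par w \<noteq> a}. \<alpha> w ^ 2) = (\<Sum>x\<in>V'. \<Sum>w\<in>ch x. \<alpha> w ^ 2)" by (rule group_V')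
    moreover have "(\<Sum>w\<in>ch x. \<alpha> w ^ 2) = real (card (ch x)) * \<gamma> (mch x) ^ 2" if x: "x \<in> V'" for x
    proof -
      have "x \<noteq> a" using V'D[OF x] by simp
      hence "(\<Sum>w\<in>ch x. \<alpha> w ^ 2) = (\<Sum>w\<in>ch x. \<gamma> (mch x) ^ 2)"
        by (intro sum.cong refl) (auto simp: al(4) ch_def)
      thus ?thesis by simp
    qed
    ultimately show ?thesis using split_V'[of "\<lambda>w. \<alpha> w ^ 2"] by simp
  qed
  have Q: "Qc \<alpha> = (18 * k ^ 2 + 12 * k - 24) * g0 ^ 2
      + (\<Sum>x\<in>V'. 4 * (real (card (ch x)) ^ 2 - real (card (ch x))) * \<gamma> (mch x) ^ 2)"
  proof -
    have "(\<Sum>x\<in>V'. sg \<alpha> x ^ 2) = (\<Sum>x\<in>V'. real (card (ch x)) ^ 2 * \<gamma> (mch x) ^ 2)"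
      by (intro sum.cong refl) (simp add: sgx power_mult_distrib)
    hence "Qc \<alpha> = -8 * g0^2 + 16 * g0^2 - 64 * g0^2 - 4 * (9 * k * g0 ^ 2 + (\<Sum>x\<in>V'. real (card (ch x)) * \<gamma> (mch x) ^ 2))
        + 2 * (3 * k * g0 + 4 * g0) ^ 2 + 4 * (\<Sum>x\<in>V'. real (card (ch x)) ^ 2 * \<gamma> (mch x) ^ 2)"
      unfolding Qc_def sq sga by (simp add: al(1) al(2) al(3) g0_def power2_eq_square algebra_simps)
    also have "\<dots> = (18 * k ^ 2 + 12 * k - 24) * g0 ^ 2
      + (\<Sum>x\<in>V'. 4 * (real (card (ch x)) ^ 2 - real (card (ch x))) * \<gamma> (mch x) ^ 2)"
      by (simp add: algebra_simps power2_eq_square sum_subtractf sum.distrib sum_distrib_left)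
    finally show ?thesis .
  qed
  have t1: "(18 * k ^ 2 + 12 * k - 24) * g0 ^ 2 \<ge> 0"
  proof -
    have "k * k \<ge> 1 * 1" by (rule mult_mono) (use k1 in auto)
    hence "18 * k ^ 2 + 12 * k - 24 \<ge> 0" using k1 by (simp add: power2_eq_square)
    thus ?thesis by simp
  qed
  have t2: "(\<Sum>x\<in>V'. 4 * (real (card (ch x)) ^ 2 - real (card (ch x))) * \<gamma> (mch x) ^ 2) \<ge> 0"
  proof (intro sum_nonneg)
    fix x
    have "real (card (ch x)) ^ 2 - real (card (ch x)) \<ge> 0"
    proof (cases "card (ch x)")
      case (Suc m) thus ?thesis by (simp add: power2_eq_square)
    qed simp
    thus "4 * (real (card (ch x)) ^ 2 - real (card (ch x))) * \<gamma> (mch x) ^ 2 \<ge> 0" by simp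
  qed
  show ?thesis using Q t1 t2 unfolding \<alpha>_def by simp
qed

lemma wv_indep:
  fixes \<gamma> :: "nat \<Rightarrow> real"
  assumes cha: "ch a \<noteq> {}"
    and z: "\<forall>x<n. (\<Sum>y\<in>DS. \<gamma> y * (\<Sum>v<n. wvG y v * col v x)) = 0"
  shows "\<forall>y\<in>DS. \<gamma> y = 0"
proof -
  define \<alpha> where "\<alpha> = (\<lambda>v. \<Sum>y\<in>DS. \<gamma> y * wvG y v)"
  have al: "\<alpha> c = -2 * \<gamma> (mch a)"
    "\<And>w. w \<in> V' \<Longrightarrow> \<alpha> w = (if par w = a then 3 * \<gamma> (mch a) else \<gamma> (mch (par w)))"
    unfolding \<alpha>_def using wv_alpha[OF cha, where \<gamma> = \<gamma>] by auto
  have "(\<Sum>v<n. \<alpha> v * col v x) = 0" if "x < n" for x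
  proof -
    have "(\<Sum>v<n. \<alpha> v * col v x) = (\<Sum>y\<in>DS. \<gamma> y * (\<Sum>v<n. wvG y v * col v x))"
      unfolding \<alpha>_def by (simp add: sum_distrib_left sum_distrib_right mult_ac sum.swap[of _ DS])
    thus ?thesis using z that by simp
  qed
  hence a0: "\<forall>v<n. \<alpha> v = 0" by (rule B_inj)
  have g0: "\<gamma> (mch a) = 0" using a0 tri al(1) by simp
  show ?thesis
  proof
    fix y assume y: "y \<in> DS"
    hence yV: "y \<in> V'" and ym: "y = mch (par y)" by (auto simp: DS_def)
    show "\<gamma> y = 0"
    proof (cases "par y = a")
      case True thus ?thesis using g0 ym by simp
    next
      case False
      have "\<alpha> y = \<gamma> y" using al(2)[OF yV] False ym by simp
      thus ?thesis using a0 V'D[OF yV] by simp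
    qed
  qed
qed

theorem main: "neg_inertia DM = card (leaves E n) + 2"
proof (cases "ch a = {}")
  case False
  have fNS: "finite NS" using fin_V' by (simp add: NS_def ND_def)
  have fDS: "finite DS" using fin_V' DS_sub by (auto intro: finite_subset)
  have lo: "card NS \<le> neg_inertia DM"
  proof (rule neg_lower[OF DM_carrier DM_sym fNS, where nv = "\<lambda>i x. \<Sum>v<n. nvG i v * col v x"])
    fix \<beta> :: "nat \<Rightarrow> real" assume "\<exists>i\<in>NS. \<beta> i \<noteq> 0"
    thus "qf DM n (\<lambda>x. \<Sum>i\<in>NS. \<beta> i * (\<Sum>v<n. nvG i v * col v x)) < 0"
      unfolding transfer using nv_neg[OF False] by blast
  qed
  have up: "neg_inertia DM + card DS \<le> n"
  proof (rule neg_upper[OF DM_carrier DM_sym fDS, where wv = "\<lambda>y x. \<Sum>v<n. wvG y v * col v x"])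
    fix \<gamma> :: "nat \<Rightarrow> real"
    show "qf DM n (\<lambda>x. \<Sum>j\<in>DS. \<gamma> j * (\<Sum>v<n. wvG j v * col v x)) \<ge> 0"
      unfolding transfer using wv_psd[OF False] by blast
    assume "\<forall>x<n. (\<Sum>j\<in>DS. \<gamma> j * (\<Sum>v<n. wvG j v * col v x)) = 0"
    thus "\<forall>j\<in>DS. \<gamma> j = 0" by (rule wv_indep[OF False])
  qed
  have c1: "card NS = card (leaves E n) + 2" "card NS + card DS = n"
    using counting[OF False] by (simp_all add: NS_def ND_def)
  show ?thesis using lo up c1 by simp
next
  case True
  have V0: "V' = {}" using cha_empty[OF True] .
  have n3: "n = 3" using card_n V0 by simp
  have l0: "leaves E n = {}" using leaves_eq V0 by simp
  have fBC: "finite {b, c}" by simp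
  have lo: "card {b, c} \<le> neg_inertia DM"
  proof (rule neg_lower[OF DM_carrier DM_sym fBC, where nv = "\<lambda>i x. \<Sum>v<n. ev i v * col v x"])
    fix \<beta> :: "nat \<Rightarrow> real" assume nz: "\<exists>i\<in>{b, c}. \<beta> i \<noteq> 0"
    define \<alpha> where "\<alpha> = (\<lambda>v. \<Sum>i\<in>{b, c}. \<beta> i * ev i v)"
    have al: "\<alpha> a = 0" "\<alpha> b = \<beta> b" "\<alpha> c = \<beta> c" using abc by (auto simp: \<alpha>_def ev_def)
    have "Qc \<alpha> = -2 * (\<beta> c ^ 2 + \<beta> b * \<beta> c + \<beta> b ^ 2)"
      unfolding Qc_def using V0 True by (simp add: al sg_def TT_def power2_eq_square algebra_simps)
    moreover have "\<beta> c ^ 2 + \<beta> b * \<beta> c + \<beta> b ^ 2 > 0"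
    proof -
      have "4 * (\<beta> c ^ 2 + \<beta> b * \<beta> c + \<beta> b ^ 2) = (2 * \<beta> c + \<beta> b) ^ 2 + 3 * \<beta> b ^ 2"
        by (simp add: power2_eq_square algebra_simps)
      moreover have "(2 * \<beta> c + \<beta> b) ^ 2 + 3 * \<beta> b ^ 2 > 0" using nz
        by (cases "\<beta> b = 0") (auto simp: add_pos_nonneg add_nonneg_pos)
      ultimately show ?thesis by simp
    qed
    ultimately have "Qc \<alpha> < 0" by simp
    thus "qf DM n (\<lambda>x. \<Sum>i\<in>{b, c}. \<beta> i * (\<Sum>v<n. ev i v * col v x)) < 0"
      unfolding transfer \<alpha>_def .
  qed
  have fA: "finite {a}" by simp
  have up: "neg_inertia DM + card {a} \<le> n"
  proof (rule neg_upper[OF DM_carrier DM_sym fA, where wv = "\<lambda>y x. \<Sum>v<n. ev y v * col v x"])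
    fix \<gamma> :: "nat \<Rightarrow> real"
    define \<alpha> where "\<alpha> = (\<lambda>v. \<Sum>i\<in>{a}. \<gamma> i * ev i v)"
    have al: "\<alpha> b = 0" "\<alpha> c = 0" using abc by (auto simp: \<alpha>_def ev_def)
    have "Qc \<alpha> = 0" unfolding Qc_def using V0 True by (simp add: al sg_def TT_def)
    thus "qf DM n (\<lambda>x. \<Sum>j\<in>{a}. \<gamma> j * (\<Sum>v<n. ev j v * col v x)) \<ge> 0"
      unfolding transfer \<alpha>_def by simp
    assume z: "\<forall>x<n. (\<Sum>j\<in>{a}. \<gamma> j * (\<Sum>v<n. ev j v * col v x)) = 0"
    have "(\<Sum>v<n. \<alpha> v * col v x) = 0" if "x < n" for x
      using z that by (simp add: \<alpha>_def sum_distrib_left mult_ac)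
    hence "\<forall>v<n. \<alpha> v = 0" by (rule B_inj)
    hence "\<alpha> a = 0" using tri by simp
    thus "\<forall>j\<in>{a}. \<gamma> j = 0" by (simp add: \<alpha>_def ev_def)
  qed
  show ?thesis using lo up abc n3 l0 by simp
qed

end

theorem theorem7p2:
  fixes E :: "nat \<Rightarrow> nat \<Rightarrow> bool" and n :: nat
  assumes n_gt: "n > 2"
    and sym: "\<And>u v. u < n \<Longrightarrow> v < n \<Longrightarrow> E u v \<longleftrightarrow> E v u"
    and irrefl: "\<And>v. v < n \<Longrightarrow> \<not> E v v"
    and conn: "connected_graph E n"
    and tri: "a < n" "b < n" "c < n" "distinct [a, b, c]" "E a b" "E b c" "E c a"
    and unique_cycle: "\<And>xs. is_cycle E n xs \<Longrightarrow> set xs = {a, b, c}"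
    and deg_b: "degree E n b = 2" and deg_c: "degree E n c = 2"
  shows "neg_inertia (dist_sq_matrix E n) = card (leaves E n) + 2"
proof -
  interpret U3 E n a b c
    by (unfold_locales) (use assms in auto)
  show ?thesis by (rule main)
qed

end
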